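(* For all $\delta\ge0$ sufficiently small, the operator $\mathcal{L}_\delta$ has a unique invariant probability density in $\mathcal{B}$: there is a unique $f_\delta\in\mathcal{B}$ with $\int f_\delta\,dx=1$ and $\mathcal{L}_\delta f_\delta=f_\delta$.
   Context: Let $b:\mathbb{R}^d\to\mathbb{R}^d$ satisfy (A) local Lipschitz continuity: for each $x_0\in\mathbb{R}^d$ there are $K>0$, $\delta_0>0$ with $|b(x_0)-b(x)|\le K|x_0-x|$ whenever $|x_0-x|<\delta_0$; and (B) dissipativity: there are $c_1\in\mathbb{R}$, $c_2>0$ with $\langle b(x),x\rangle\le c_1-c_2|x|^2$ for all $x\in\mathbb{R}^d$. Let $X^x_t$ be the solution of $dX_t^x=b(X_t^x)\,dt+dW_t$, $X_0^x=x$, with $W$ a standard Brownian motion in $\mathbb{R}^d$, and let $\theta_t$ be the flow of $\dot\theta=b(\theta)$. It is known that the law of $X_1^x$ has a density $\kappa(x,y)$ (in $y$, w.r.t. Lebesgue measure), continuous in $(x,y)$, and that there are constants $\lambda_0,\lambda_1\in(0,1]$, $C_0,C_1\ge 1$ such that for all $x,y$: $C_0^{-1}e^{-|\theta_1(x)-y|^2/\lambda_0}\le\kappa(x,y)\le C_0e^{-\lambda_0|\theta_1(x)-y|^2}$ and $|\nabla_x\kappa(x,y)|,|\nabla_y\kappa(x,y)|\le C_1e^{-\lambda_1|\theta_1(x)-y|^2}$. The transfer operator $\mathcal{L}=\mathcal{L}_0:L^1(\mathbb{R}^d)\to L^1(\mathbb{R}^d)$ is $\mathcal{L}f(y)=\int_{\mathbb{R}^d}\kappa(x,y)f(x)\,dx$.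 Spaces: for $\alpha\ge0$ let $\rho_\alpha(x)=(1+|x|^2)^{\alpha/2}$ and let $L^1_\alpha$ be the space of measurable $f:\mathbb{R}^d\to\mathbb{R}$ with $\|f\|_{L^1_\alpha}=\int\rho_\alpha(x)|f(x)|\,dx<\infty$. Fix a compact set $D\subset\mathbb{R}^d$ (a compact neighbourhood of $0$). The strong norm is $\|f\|_s=\|f\|_{L^1_2}+\|1_Df\|_{L^2}$ and the strong space is $\mathcal{B}=\{f\in L^1_2:\|f\|_s<\infty\}$. Set $V_{\mathcal{B}}=\{f\in\mathcal{B}:\int f\,dx=0\}$ and $V_{L^1}=\{f\in L^1:\int f\,dx=0\}$. Perturbations: fix $\bar\delta>0$. For $\delta\in[0,\bar\delta)$ let $\kappa_\delta=\kappa+\delta\dot\kappa+r_\delta$, where $\dot\kappa,r_\delta\in L^2(D\times D)$ (extended by zero outside $D\times D$), $r_0=0$, and $\|r_\delta\|_{L^2}=o(\delta)$ as $\delta\to0$. Define $\mathcal{L}_\delta f(y)=\int\kappa_\delta(x,y)f(x)\,dx$ and $\dot{\mathcal{L}}f(y)=\int\dot\kappa(x,y)f(x)\,dx$. Standing assumption: every $\mathcal{L}_\delta$, $\delta\in[0,\bar\delta)$, is integral preserving, i.e. $\int\mathcal{L}_\delta g\,dy=\int g\,dx$ for all $g\in L^1$. *)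

theory Defs
  imports "HOL-Analysis.Analysis"
begin

definition rho :: "real \<Rightarrow> 'a::euclidean_space \<Rightarrow> real" where
  "rho \<alpha> x = (1 + (norm x)^2) powr (\<alpha> / 2)"

definition L1w :: "real \<Rightarrow> ('a::euclidean_space \<Rightarrow> real) set" where
  "L1w \<alpha> = {f. f \<in> borel_measurable lebesgue \<and>
                  integrable lebesgue (\<lambda>x. rho \<alpha> x * f x)}"

definition strong_space :: "'a::euclidean_space set \<Rightarrow> ('a \<Rightarrow> real) set" where
  "strong_space D = {f \<in> L1w 2. integrable lebesgue (\<lambda>x. (indicator D x * f x)^2)}"

definition transfer :: "('a::euclidean_space \<Rightarrow> 'a \<Rightarrow> real) \<Rightarrow> ('a \<Rightarrow> real) \<Rightarrow> 'a \<Rightarrow> real" where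
  "transfer k f = (\<lambda>y. LINT x|lebesgue. k x y * f x)"

definition L2kernel :: "('a::euclidean_space \<Rightarrow> 'a \<Rightarrow> real) \<Rightarrow> bool" where
  "L2kernel k \<longleftrightarrow> (\<lambda>z. k (fst z) (snd z)) \<in> borel_measurable (lborel :: ('a \<times> 'a) measure) \<and>
                   integrable (lborel :: ('a \<times> 'a) measure) (\<lambda>z. (k (fst z) (snd z))^2)"

definition L2norm :: "('a::euclidean_space \<Rightarrow> 'a \<Rightarrow> real) \<Rightarrow> real" where
  "L2norm k = sqrt (LINT z|(lborel :: ('a \<times> 'a) measure). (k (fst z) (snd z))^2)"

end

theory Submission
  imports Defs "HOL-Probability.Probability"
begin


lemma gauss1_integrable:
  fixes \<mu> :: real assumes "\<mu> > 0"
  shows "integrable lborel (\<lambda>x::real. exp (- \<mu> * x\<^sup>2))"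
proof -
  define \<sigma> where "\<sigma> = sqrt (1 / (2*\<mu>))"
  have s: "\<sigma> > 0" "\<sigma>\<^sup>2 = 1/(2*\<mu>)" using assms by (auto simp: \<sigma>_def)
  have eq: "(\<lambda>x::real. exp (- \<mu> * x\<^sup>2)) = (\<lambda>x. sqrt (2 * pi * \<sigma>\<^sup>2) * normal_density 0 \<sigma> x)"
    using s assms by (auto simp: normal_density_def fun_eq_iff field_simps)
  show ?thesis unfolding eq by (intro integrable_mult_right integrable_normal_density[OF s(1)])
qed

lemma gauss_nn_fin:
  fixes \<mu> :: real assumes mu: "\<mu> > 0"
  shows "(\<integral>\<^sup>+z. ennreal (exp (- \<mu> * (norm (z::'a::euclidean_space))\<^sup>2)) \<partial>lborel) < \<infinity>"
proof -
  have eq: "exp (- \<mu> * (norm z)\<^sup>2) = (\<Prod>b\<in>Basis. exp (- \<mu> * (z \<bullet> b)\<^sup>2))" for z :: 'a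
  proof -
    have "(norm z)\<^sup>2 = z \<bullet> z" by (rule power2_norm_eq_inner)
    also have "\<dots> = (\<Sum>b\<in>Basis. (z \<bullet> b) * (z \<bullet> b))" by (rule euclidean_inner)
    finally have "(norm z)\<^sup>2 = (\<Sum>b\<in>Basis. (z \<bullet> b)\<^sup>2)" by (simp add: power2_eq_square)
    then have "- \<mu> * (norm z)\<^sup>2 = (\<Sum>b\<in>Basis. - \<mu> * (z \<bullet> b)\<^sup>2)"
      by (simp add: sum_distrib_left)
    then show ?thesis by (simp add: exp_sum)
  qed
  have "(\<integral>\<^sup>+z. ennreal (exp (- \<mu> * (norm (z::'a))\<^sup>2)) \<partial>lborel)
      = (\<integral>\<^sup>+z. (\<Prod>b\<in>Basis. ennreal (exp (- \<mu> * ((z::'a) \<bullet> b)\<^sup>2))) \<partial>lborel)"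
    unfolding eq by (simp add: prod_ennreal)
  also have "\<dots> = (\<Prod>b\<in>(Basis::'a set). (\<integral>\<^sup>+x. ennreal (exp (- \<mu> * x\<^sup>2)) \<partial>lborel))"
    by (rule nn_integral_lborel_prod) auto
  also have "\<dots> < \<infinity>"
  proof -
    have "(\<integral>\<^sup>+x. ennreal (exp (- \<mu> * x\<^sup>2)) \<partial>lborel) = ennreal (LINT x|lborel. exp (- \<mu> * x\<^sup>2))"
      by (rule nn_integral_eq_integral[OF gauss1_integrable[OF mu]]) auto
    then show ?thesis by (simp add: power_less_top_ennreal)
  qed
  finally show ?thesis .
qed

lemma nn_integral_translate:
  fixes f :: "'a::euclidean_space \<Rightarrow> ennreal"
  assumes [measurable]: "f \<in> borel_measurable borel"
  shows "(\<integral>\<^sup>+y. f (y - c) \<partial>lborel) = (\<integral>\<^sup>+z. f z \<partial>lborel)"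
proof -
  have "(\<integral>\<^sup>+y. f (y - c) \<partial>lborel) = (\<integral>\<^sup>+y. f (y - c) \<partial>distr lborel borel ((+) c))"
    by (simp add: lborel_distr_plus)
  also have "\<dots> = (\<integral>\<^sup>+x. f (c + x - c) \<partial>lborel)"
    by (subst nn_integral_distr) auto
  finally show ?thesis by simp
qed


definition Wf :: "'a::euclidean_space \<Rightarrow> real" where "Wf x = (norm x)^2"

definition Tk :: "('a::euclidean_space \<Rightarrow> 'a \<Rightarrow> real) \<Rightarrow> ('a \<Rightarrow> real) \<Rightarrow> 'a \<Rightarrow> real" where
  "Tk k f y = (\<integral>x. k x y * f x \<partial>lborel)"

definition Bb :: "'a::euclidean_space set \<Rightarrow> ('a \<Rightarrow> real) set" where
  "Bb D = {f. f \<in> borel_measurable borel \<and> integrable lborel (\<lambda>x. (1 + Wf x) * f x)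
              \<and> integrable lborel (\<lambda>x. (indicator D x * f x)^2)}"

definition nb :: "real \<Rightarrow> ('a::euclidean_space \<Rightarrow> real) \<Rightarrow> real" where
  "nb \<beta> f = (\<integral>x. (1 + \<beta> * Wf x) * \<bar>f x\<bar> \<partial>lborel)"

definition Qd :: "'a::euclidean_space set \<Rightarrow> ('a \<Rightarrow> real) \<Rightarrow> real" where
  "Qd D f = (\<integral>x. (indicator D x * f x)^2 \<partial>lborel)"

lemma Wf_nonneg[simp]: "0 \<le> Wf x" by (simp add: Wf_def)

lemma Wf_meas[measurable]: "Wf \<in> borel_measurable borel"
  unfolding Wf_def by measurable

lemma sq_sum_le: "(a + b)^2 \<le> 2 * a^2 + 2 * (b::real)^2"
proof -
  have "0 \<le> (a - b)^2" by simp
  then show ?thesis by (simp add: power2_eq_square algebra_simps)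
qed

lemma BbD:
  assumes "f \<in> Bb D"
  shows "f \<in> borel_measurable borel" "integrable lborel (\<lambda>x. (1 + Wf x) * f x)"
    "integrable lborel (\<lambda>x. (indicator D x * f x)^2)"
  using assms by (auto simp: Bb_def)

lemma Bb_int_w:
  assumes "f \<in> Bb D" "0 \<le> \<beta>"
  shows "integrable lborel (\<lambda>x. (1 + \<beta> * Wf x) * \<bar>f x\<bar>)"
proof -
  note f[measurable] = BbD(1)[OF assms(1)]
  have i: "integrable lborel (\<lambda>x. (1 + \<beta>) * ((1 + Wf x) * f x))"
    using BbD(2)[OF assms(1)] by simp
  show ?thesis
  proof (rule Bochner_Integration.integrable_bound[OF i])
    show "(\<lambda>x. (1 + \<beta> * Wf x) * \<bar>f x\<bar>) \<in> borel_measurable lborel" by measurable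
    show "AE x in lborel. norm ((1 + \<beta> * Wf x) * \<bar>f x\<bar>) \<le> norm ((1 + \<beta>) * ((1 + Wf x) * f x))"
    proof (rule AE_I2)
      fix x :: 'a
      have "1 + \<beta> * Wf x \<le> (1 + \<beta>) * (1 + Wf x)"
        using assms(2) Wf_nonneg[of x] by (simp add: algebra_simps)
      then have "(1 + \<beta> * Wf x) * \<bar>f x\<bar> \<le> (1 + \<beta>) * (1 + Wf x) * \<bar>f x\<bar>"
        by (simp add: mult_right_mono)
      then show "norm ((1 + \<beta> * Wf x) * \<bar>f x\<bar>) \<le> norm ((1 + \<beta>) * ((1 + Wf x) * f x))"
        using assms(2) Wf_nonneg[of x] by (simp add: abs_mult)
    qed
  qed
qed

lemma le_w1: "\<bar>y\<bar> \<le> (1 + Wf x) * \<bar>y::real\<bar>"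
  using mult_right_mono[of 1 "1 + Wf x" "\<bar>y\<bar>"] by simp

lemma le_w2: "Wf x * \<bar>y\<bar> \<le> (1 + Wf x) * \<bar>y::real\<bar>"
  using mult_right_mono[of "Wf x" "1 + Wf x" "\<bar>y\<bar>"] by simp

lemma Bb_int:
  assumes "f \<in> Bb D"
  shows "integrable lborel f" "integrable lborel (\<lambda>x. \<bar>f x\<bar>)"
    "integrable lborel (\<lambda>x. Wf x * \<bar>f x\<bar>)"
proof -
  note f[measurable] = BbD(1)[OF assms(1)]
  have i: "integrable lborel (\<lambda>x. (1 + 1 * Wf x) * \<bar>f x\<bar>)" by (rule Bb_int_w[OF assms]) simp
  show "integrable lborel f"
    by (rule Bochner_Integration.integrable_bound[OF i]) (auto simp: abs_mult le_w1)
  then show "integrable lborel (\<lambda>x. \<bar>f x\<bar>)" by simp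
  show "integrable lborel (\<lambda>x. Wf x * \<bar>f x\<bar>)"
    by (rule Bochner_Integration.integrable_bound[OF i]) (auto simp: abs_mult le_w2)
qed

context fixes D :: "'a::euclidean_space set" assumes Dm[measurable]: "D \<in> sets borel"
begin

lemma Bb_add:
  assumes "f \<in> Bb D" "g \<in> Bb D"
  shows "(\<lambda>x. f x + g x) \<in> Bb D"
proof -
  note [measurable] = BbD(1)[OF assms(1)] BbD(1)[OF assms(2)]
  have 1: "integrable lborel (\<lambda>x. (1 + Wf x) * (f x + g x))"
    using Bochner_Integration.integrable_add[OF BbD(2)[OF assms(1)] BbD(2)[OF assms(2)]] by (simp add: distrib_left)
  have i: "integrable lborel (\<lambda>x. 2 * (indicator D x * f x)^2 + 2 * (indicator D x * g x)^2)"
    using BbD(3)[OF assms(1)] BbD(3)[OF assms(2)] by auto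
  have 2: "integrable lborel (\<lambda>x. (indicator D x * (f x + g x))^2)"
  proof (rule Bochner_Integration.integrable_bound[OF i])
    show "(\<lambda>x. (indicator D x * (f x + g x))^2) \<in> borel_measurable lborel"
      by measurable
    show "AE x in lborel. norm ((indicator D x * (f x + g x))^2) \<le> norm (2 * (indicator D x * f x)^2 + 2 * (indicator D x * g x)^2)"
      using sq_sum_le by (auto simp: distrib_left)
  qed
  show ?thesis using 1 2 by (auto simp: Bb_def)
qed

lemma Bb_dom:
  assumes f: "f \<in> Bb D" and g[measurable]: "g \<in> borel_measurable borel"
    and le: "\<And>x. \<bar>g x\<bar> \<le> \<bar>f x\<bar>"
  shows "g \<in> Bb D"
proof -
  note [measurable] = BbD(1)[OF f]
  have 1: "integrable lborel (\<lambda>x. (1 + Wf x) * g x)"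
  proof (rule Bochner_Integration.integrable_bound[OF BbD(2)[OF f]])
    show "(\<lambda>x. (1 + Wf x) * g x) \<in> borel_measurable lborel" by measurable
    show "AE x in lborel. norm ((1 + Wf x) * g x) \<le> norm ((1 + Wf x) * f x)"
      using le by (auto simp: abs_mult intro!: mult_left_mono add_nonneg_nonneg)
  qed
  have 2: "integrable lborel (\<lambda>x. (indicator D x * g x)^2)"
  proof (rule Bochner_Integration.integrable_bound[OF BbD(3)[OF f]])
    show "(\<lambda>x. (indicator D x * g x)^2) \<in> borel_measurable lborel"
      by measurable
    show "AE x in lborel. norm ((indicator D x * g x)^2) \<le> norm ((indicator D x * f x)^2)"
    proof (rule AE_I2)
      fix x :: 'a
      have "\<bar>indicator D x * g x\<bar> \<le> \<bar>indicator D x * f x\<bar>"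
        using le[of x] by (auto simp: indicator_def)
      then have "(indicator D x * g x)^2 \<le> (indicator D x * f x)^2"
        by (simp add: abs_le_square_iff)
      then show "norm ((indicator D x * g x)^2) \<le> norm ((indicator D x * f x)^2)" by simp
    qed
  qed
  show ?thesis using 1 2 by (auto simp: Bb_def)
qed

lemma Bb_scale:
  assumes f: "f \<in> Bb D"
  shows "(\<lambda>x. c * f x) \<in> Bb D"
proof -
  note [measurable] = BbD(1)[OF f]
  have eq: "(\<lambda>x. (1 + Wf x) * (c * f x)) = (\<lambda>x. c * ((1 + Wf x) * f x))"
    by (auto simp: fun_eq_iff)
  have 1: "integrable lborel (\<lambda>x. (1 + Wf x) * (c * f x))"
    unfolding eq by (intro Bochner_Integration.integrable_mult_right BbD(2)[OF f])
  have 2: "integrable lborel (\<lambda>x. (indicator D x * (c * f x))^2)"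
    using BbD(3)[OF f] by (simp add: power_mult_distrib algebra_simps)
  show ?thesis using 1 2 by (auto simp: Bb_def)
qed

lemma Bb_diff:
  assumes "f \<in> Bb D" "g \<in> Bb D"
  shows "(\<lambda>x. f x - g x) \<in> Bb D"
  using Bb_add[OF assms(1) Bb_scale[OF assms(2), of "-1"]] by simp

lemma Bb_pos:
  assumes "f \<in> Bb D" shows "(\<lambda>x. max (f x) 0) \<in> Bb D" "(\<lambda>x. max (- f x) 0) \<in> Bb D"
  using BbD(1)[OF assms] by (auto intro!: Bb_dom[OF assms])

lemma Bb_abs:
  assumes "f \<in> Bb D" shows "(\<lambda>x. \<bar>f x\<bar>) \<in> Bb D"
  using BbD(1)[OF assms] by (auto intro!: Bb_dom[OF assms])

lemma Bb_ind:
  assumes "f \<in> Bb D" "S \<in> sets borel" shows "(\<lambda>x. indicator S x * f x) \<in> Bb D"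
  using BbD(1)[OF assms(1)] assms(2) by (auto intro!: Bb_dom[OF assms(1)] simp: indicator_def)

lemma Bb_strong:
  assumes "f \<in> Bb D" shows "f \<in> strong_space D"
proof -
  note [measurable] = BbD(1)[OF assms]
  have r: "rho 2 x = 1 + Wf x" for x :: 'a
    by (simp add: rho_def Wf_def)
  have "integrable lebesgue (\<lambda>x. rho 2 x * f x)"
    unfolding r by (subst integrable_completion) (auto intro: BbD(2)[OF assms])
  moreover have "integrable lebesgue (\<lambda>x. (indicator D x * f x)^2)"
    by (subst integrable_completion) (auto intro: BbD(3)[OF assms])
  moreover have "f \<in> borel_measurable lebesgue"
    by (rule measurable_completion) simp
  ultimately show ?thesis by (auto simp: strong_space_def L1w_def)
qed

lemma Bb_AE:
  assumes g: "g \<in> Bb D" and h[measurable]: "h \<in> borel_measurable borel" and ae: "AE x in lborel. h x = g x"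
  shows "h \<in> Bb D"
proof -
  note [measurable] = BbD(1)[OF g]
  have 1: "integrable lborel (\<lambda>x. (1 + Wf x) * h x)"
  proof (rule integrable_cong_AE_imp[OF BbD(2)[OF g]])
    show "(\<lambda>x. (1 + Wf x) * h x) \<in> borel_measurable lborel" by measurable
    show "AE x in lborel. (1 + Wf x) * g x = (1 + Wf x) * h x" using ae by eventually_elim simp
  qed
  have 2: "integrable lborel (\<lambda>x. (indicator D x * h x)^2)"
  proof (rule integrable_cong_AE_imp[OF BbD(3)[OF g]])
    show "(\<lambda>x. (indicator D x * h x)^2) \<in> borel_measurable lborel" by measurable
    show "AE x in lborel. (indicator D x * g x)^2 = (indicator D x * h x)^2" using ae by eventually_elim simp
  qed
  show ?thesis using 1 2 h by (auto simp: Bb_def)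
qed

lemma ind_Bb:
  assumes S[measurable]: "S \<in> sets borel" and sub: "S \<subseteq> cball 0 n"
  shows "(\<lambda>x. indicator S x :: real) \<in> Bb D"
proof -
  have fin: "emeasure lborel S < \<infinity>"
    using emeasure_mono[OF sub, of lborel] emeasure_lborel_cball_finite[of "0::'a" n]
    by (auto simp: top.extremum_strict le_less_trans)
  have i1: "integrable lborel (\<lambda>x. indicator S x *\<^sub>R (1 + Wf x))"
  proof (rule integrableI_bounded_set_indicator[where B="1 + n^2"])
    show "S \<in> sets lborel" by simp
    show "(\<lambda>x. 1 + Wf x) \<in> borel_measurable lborel" by measurable
    show "emeasure lborel S < \<infinity>" by (rule fin)
    show "AE x in lborel. x \<in> S \<longrightarrow> norm (1 + Wf x) \<le> 1 + n^2"
    proof (rule AE_I2, rule impI)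
      fix x assume "x \<in> S"
      then have "norm x \<le> n" using sub by auto
      then have "(norm x)^2 \<le> n^2" by (simp add: power_mono)
      then show "norm (1 + Wf x) \<le> 1 + n^2" by (simp add: Wf_def)
    qed
  qed
  have 1: "integrable lborel (\<lambda>x. (1 + Wf x) * indicator S x)"
    using i1 by (simp add: mult.commute)
  have eq: "(\<lambda>x. (indicator D x * indicator S x)^2) = (indicator (D \<inter> S) :: 'a \<Rightarrow> real)"
    by (auto simp: fun_eq_iff indicator_def)
  have fin2: "emeasure lborel (D \<inter> S) < \<infinity>"
    using emeasure_mono[of "D \<inter> S" S lborel] fin by auto
  have 2: "integrable lborel (\<lambda>x. (indicator D x * indicator S x :: real)^2)"
    unfolding eq using fin2 by (intro integrable_real_indicator) auto
  show ?thesis using 1 2 by (auto simp: Bb_def)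
qed

end

lemma CS_real:
  fixes u v :: "'b \<Rightarrow> real"
  assumes [measurable]: "u \<in> borel_measurable M" "v \<in> borel_measurable M"
    and iu: "integrable M (\<lambda>x. (u x)^2)" and iv: "integrable M (\<lambda>x. (v x)^2)"
  shows "integrable M (\<lambda>x. u x * v x)"
    "(\<integral>x. \<bar>u x * v x\<bar> \<partial>M) \<le> sqrt (\<integral>x. (u x)^2 \<partial>M) * sqrt (\<integral>x. (v x)^2 \<partial>M)"
proof -
  define U where "U = (\<integral>x. (u x)^2 \<partial>M)"
  define V where "V = (\<integral>x. (v x)^2 \<partial>M)"
  have U0: "0 \<le> U" "0 \<le> V" unfolding U_def V_def by (auto intro: integral_nonneg_AE)
  have cs: "(\<integral>\<^sup>+x. ennreal \<bar>u x\<bar> * ennreal \<bar>v x\<bar> \<partial>M)\<^sup>2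
      \<le> (\<integral>\<^sup>+x. (ennreal \<bar>u x\<bar>)^2 \<partial>M) * (\<integral>\<^sup>+x. (ennreal \<bar>v x\<bar>)^2 \<partial>M)"
    by (rule Cauchy_Schwarz_nn_integral) measurable
  have e1: "(\<integral>\<^sup>+x. (ennreal \<bar>u x\<bar>)^2 \<partial>M) = ennreal U"
  proof -
    have "(\<integral>\<^sup>+x. (ennreal \<bar>u x\<bar>)^2 \<partial>M) = (\<integral>\<^sup>+x. ennreal ((u x)^2) \<partial>M)"
      by (simp add: ennreal_power)
    also have "\<dots> = ennreal U" unfolding U_def using iu by (intro nn_integral_eq_integral) auto
    finally show ?thesis .
  qed
  have e2: "(\<integral>\<^sup>+x. (ennreal \<bar>v x\<bar>)^2 \<partial>M) = ennreal V"
  proof -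
    have "(\<integral>\<^sup>+x. (ennreal \<bar>v x\<bar>)^2 \<partial>M) = (\<integral>\<^sup>+x. ennreal ((v x)^2) \<partial>M)"
      by (simp add: ennreal_power)
    also have "\<dots> = ennreal V" unfolding V_def using iv by (intro nn_integral_eq_integral) auto
    finally show ?thesis .
  qed
  have e3: "(\<integral>\<^sup>+x. ennreal \<bar>u x\<bar> * ennreal \<bar>v x\<bar> \<partial>M) = (\<integral>\<^sup>+x. ennreal (norm (u x * v x)) \<partial>M)"
    by (simp add: ennreal_mult abs_mult)
  define X where "X = (\<integral>\<^sup>+x. ennreal (norm (u x * v x)) \<partial>M)"
  have X2: "X^2 \<le> ennreal (U * V)"
    using cs unfolding e1 e2 e3 X_def using U0 by (simp add: ennreal_mult)
  have "X^2 < top" using X2 by (rule le_less_trans) simp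
  then have Xfin: "X < top" by (simp add: power_less_top_ennreal)
  show i: "integrable M (\<lambda>x. u x * v x)"
    using Xfin unfolding X_def by (subst integrable_iff_bounded) auto
  define I where "I = (\<integral>x. \<bar>u x * v x\<bar> \<partial>M)"
  have I0: "0 \<le> I" unfolding I_def by simp
  have "X = ennreal I" unfolding X_def I_def real_norm_def using i by (intro nn_integral_eq_integral) auto
  then have "ennreal (I^2) \<le> ennreal (U * V)" using X2 I0 by (simp add: ennreal_power)
  then have "I^2 \<le> U * V" using U0 by (simp add: ennreal_le_iff)
  then have "I \<le> sqrt (U * V)" by (rule real_le_rsqrt)
  then show "(\<integral>x. \<bar>u x * v x\<bar> \<partial>M) \<le> sqrt (\<integral>x. (u x)^2 \<partial>M) * sqrt (\<integral>x. (v x)^2 \<partial>M)"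
    unfolding I_def U_def V_def by (simp add: real_sqrt_mult)
qed

lemma tonelli_w:
  fixes k :: "'a::euclidean_space \<Rightarrow> 'a \<Rightarrow> real"
  assumes km[measurable]: "(\<lambda>(x,y). k x y) \<in> borel_measurable (lborel \<Otimes>\<^sub>M lborel)"
    and knn: "\<And>x y. 0 \<le> k x y"
    and f[measurable]: "f \<in> borel_measurable borel"
    and w[measurable]: "w \<in> borel_measurable borel" and wnn: "\<And>y. 0 \<le> w y"
  shows "(\<integral>\<^sup>+y. ennreal (w y * \<bar>Tk k f y\<bar>) \<partial>lborel)
     \<le> (\<integral>\<^sup>+x. ennreal \<bar>f x\<bar> * (\<integral>\<^sup>+y. ennreal (w y * k x y) \<partial>lborel) \<partial>lborel)"
proof -
  have pt: "ennreal \<bar>Tk k f y\<bar> \<le> (\<integral>\<^sup>+x. ennreal (k x y * \<bar>f x\<bar>) \<partial>lborel)" for y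
  proof (cases "integrable lborel (\<lambda>x. k x y * f x)")
    case True
    have "ennreal \<bar>Tk k f y\<bar> \<le> (\<integral>\<^sup>+x. ennreal (norm (k x y * f x)) \<partial>lborel)"
      using integral_norm_bound_ennreal[OF True] by (simp add: Tk_def)
    also have "\<dots> = (\<integral>\<^sup>+x. ennreal (k x y * \<bar>f x\<bar>) \<partial>lborel)"
      using knn by (simp add: abs_mult)
    finally show ?thesis .
  next
    case False
    then show ?thesis by (simp add: Tk_def not_integrable_integral_eq)
  qed
  have "(\<integral>\<^sup>+y. ennreal (w y * \<bar>Tk k f y\<bar>) \<partial>lborel)
      \<le> (\<integral>\<^sup>+y. ennreal (w y) * (\<integral>\<^sup>+x. ennreal (k x y * \<bar>f x\<bar>) \<partial>lborel) \<partial>lborel)"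
    using pt wnn by (auto intro!: nn_integral_mono mult_left_mono simp: ennreal_mult)
  also have "\<dots> = (\<integral>\<^sup>+y. (\<integral>\<^sup>+x. ennreal (w y * k x y * \<bar>f x\<bar>) \<partial>lborel) \<partial>lborel)"
    using wnn knn by (simp add: nn_integral_cmult[symmetric] ennreal_mult mult.assoc)
  also have "\<dots> = (\<integral>\<^sup>+x. (\<integral>\<^sup>+y. ennreal (w y * k x y * \<bar>f x\<bar>) \<partial>lborel) \<partial>lborel)"
    by (rule lborel_pair.Fubini') measurable
  also have "\<dots> = (\<integral>\<^sup>+x. ennreal \<bar>f x\<bar> * (\<integral>\<^sup>+y. ennreal (w y * k x y) \<partial>lborel) \<partial>lborel)"
    using wnn knn by (simp add: nn_integral_cmult[symmetric] ennreal_mult mult.commute mult.left_commute)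
  finally show ?thesis .
qed


locale base =
  fixes \<kappa> :: "'a::euclidean_space \<Rightarrow> 'a \<Rightarrow> real" and \<theta>1 :: "'a \<Rightarrow> 'a" and D :: "'a set"
    and lam0 C0 a A :: real
  assumes Dm[measurable]: "D \<in> sets borel"
    and \<kappa>m[measurable]: "(\<lambda>(x,y). \<kappa> x y) \<in> borel_measurable (lborel \<Otimes>\<^sub>M lborel)"
    and lam0: "0 < lam0" and C0: "1 \<le> C0"
    and lower: "\<And>x y. exp (- ((norm (\<theta>1 x - y))^2) / lam0) / C0 \<le> \<kappa> x y"
    and upper: "\<And>x y. \<kappa> x y \<le> C0 * exp (- lam0 * (norm (\<theta>1 x - y))^2)"
    and flowb: "\<And>x. (norm (\<theta>1 x))^2 \<le> a * (norm x)^2 + A"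
    and a: "0 \<le> a" "a < 1" and A: "0 \<le> A"
    and Dfin: "emeasure lborel D < \<infinity>"
    and pres: "\<And>g. g \<in> strong_space D \<Longrightarrow> integrable lebesgue (transfer \<kappa> g) \<and>
         (LINT y|lebesgue. transfer \<kappa> g y) = (LINT x|lebesgue. g x)"
begin

lemma \<kappa>_nn: "0 \<le> \<kappa> x y"
proof -
  have "0 \<le> exp (- ((norm (\<theta>1 x - y))^2) / lam0) / C0" using C0 by simp
  then show ?thesis using lower[of x y] by linarith
qed

lemma \<kappa>_le: "\<kappa> x y \<le> C0"
proof -
  have "exp (- lam0 * (norm (\<theta>1 x - y))^2) \<le> 1" using lam0 by simp
  then have "C0 * exp (- lam0 * (norm (\<theta>1 x - y))^2) \<le> C0 * 1"
    using C0 by (intro mult_left_mono) auto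
  then show ?thesis using upper[of x y] by linarith
qed

lemma \<kappa>_sec[measurable]: "(\<lambda>x. \<kappa> x y) \<in> borel_measurable borel"
  by measurable

lemma T_meas[measurable]:
  assumes [measurable]: "f \<in> borel_measurable borel"
  shows "Tk \<kappa> f \<in> borel_measurable borel"
proof -
  have "(\<lambda>y. \<integral>x. \<kappa> x y * f x \<partial>lborel) \<in> borel_measurable lborel"
    by (rule lborel.borel_measurable_lebesgue_integral) measurable
  then show ?thesis by (simp add: Tk_def[abs_def])
qed

lemma T_int:
  assumes [measurable]: "f \<in> borel_measurable borel" and i: "integrable lborel f"
  shows "integrable lborel (\<lambda>x. \<kappa> x y * f x)"
proof -
  have i2: "integrable lborel (\<lambda>x. C0 * f x)" using i by simp
  show ?thesis
  proof (rule Bochner_Integration.integrable_bound[OF i2])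
    show "(\<lambda>x. \<kappa> x y * f x) \<in> borel_measurable lborel" by measurable
    show "AE x in lborel. norm (\<kappa> x y * f x) \<le> norm (C0 * f x)"
    proof (rule AE_I2)
      fix x
      have "\<kappa> x y * \<bar>f x\<bar> \<le> C0 * \<bar>f x\<bar>" by (rule mult_right_mono[OF \<kappa>_le]) simp
      then show "norm (\<kappa> x y * f x) \<le> norm (C0 * f x)" using C0 \<kappa>_nn[of x y] by (simp add: abs_mult)
    qed
  qed
qed

lemma transfer_eq:
  assumes [measurable]: "f \<in> borel_measurable borel"
  shows "transfer \<kappa> f = Tk \<kappa> f"
  unfolding transfer_def Tk_def by (auto simp: fun_eq_iff intro!: integral_completion) 

lemma T_nonneg: "(\<And>x. 0 \<le> f x) \<Longrightarrow> 0 \<le> Tk \<kappa> f y"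
  unfolding Tk_def by (auto intro!: integral_nonneg_AE simp: \<kappa>_nn)

lemma T_bound:
  assumes [measurable]: "f \<in> borel_measurable borel" and i: "integrable lborel f"
  shows "\<bar>Tk \<kappa> f y\<bar> \<le> C0 * (\<integral>x. \<bar>f x\<bar> \<partial>lborel)"
proof -
  have "\<bar>Tk \<kappa> f y\<bar> \<le> (\<integral>x. \<bar>\<kappa> x y * f x\<bar> \<partial>lborel)"
    unfolding Tk_def by (rule integral_abs_bound)
  also have "\<dots> \<le> (\<integral>x. C0 * \<bar>f x\<bar> \<partial>lborel)"
  proof (rule integral_mono)
    show "integrable lborel (\<lambda>x. \<bar>\<kappa> x y * f x\<bar>)" using T_int[OF assms] by simp
    show "integrable lborel (\<lambda>x. C0 * \<bar>f x\<bar>)" using i by simp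
    fix x
    have "\<kappa> x y * \<bar>f x\<bar> \<le> C0 * \<bar>f x\<bar>" by (rule mult_right_mono[OF \<kappa>_le]) simp
    then show "\<bar>\<kappa> x y * f x\<bar> \<le> C0 * \<bar>f x\<bar>" using \<kappa>_nn[of x y] by (simp add: abs_mult)
  qed
  finally show ?thesis by simp
qed

lemma T_add:
  assumes [measurable]: "f \<in> borel_measurable borel" "g \<in> borel_measurable borel"
    and "integrable lborel f" "integrable lborel g"
  shows "Tk \<kappa> (\<lambda>x. f x + g x) y = Tk \<kappa> f y + Tk \<kappa> g y"
  using T_int[OF assms(1,3)] T_int[OF assms(2,4)]
  unfolding Tk_def by (simp add: distrib_left)

lemma T_diff:
  assumes [measurable]: "f \<in> borel_measurable borel" "g \<in> borel_measurable borel"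
    and "integrable lborel f" "integrable lborel g"
  shows "Tk \<kappa> (\<lambda>x. f x - g x) y = Tk \<kappa> f y - Tk \<kappa> g y"
  using T_int[OF assms(1,3)] T_int[OF assms(2,4)]
  unfolding Tk_def by (simp add: right_diff_distrib)

lemma T_mass:
  assumes f: "f \<in> Bb D"
  shows "integrable lborel (Tk \<kappa> f)" "(\<integral>y. Tk \<kappa> f y \<partial>lborel) = (\<integral>x. f x \<partial>lborel)"
proof -
  note [measurable] = BbD(1)[OF f]
  have p: "integrable lebesgue (transfer \<kappa> f)"
    "(LINT y|lebesgue. transfer \<kappa> f y) = (LINT x|lebesgue. f x)"
    using pres[OF Bb_strong[OF Dm f]] by auto
  then show "integrable lborel (Tk \<kappa> f)"
    unfolding transfer_eq[OF BbD(1)[OF f]] by (subst (asm) integrable_completion) auto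
  show "(\<integral>y. Tk \<kappa> f y \<partial>lborel) = (\<integral>x. f x \<partial>lborel)"
    using p(2) unfolding transfer_eq[OF BbD(1)[OF f]]
    by (simp add: integral_completion)
qed

definition Mx :: "'a \<Rightarrow> ennreal" where "Mx x = (\<integral>\<^sup>+y. ennreal (\<kappa> x y) \<partial>lborel)"

lemma Mx_meas[measurable]: "Mx \<in> borel_measurable borel"
proof -
  have "(\<lambda>x. \<integral>\<^sup>+y. ennreal (\<kappa> x y) \<partial>lborel) \<in> borel_measurable lborel"
    using lborel.borel_measurable_nn_integral_fst[of "\<lambda>z. ennreal (\<kappa> (fst z) (snd z))" lborel]
    by (simp add: case_prod_beta')
  then show ?thesis unfolding Mx_def[abs_def] by simp
qed

lemma mass_eq:
  assumes g: "g \<in> Bb D" and gnn: "\<And>x. 0 \<le> g x"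
  shows "ennreal (\<integral>x. g x \<partial>lborel) = (\<integral>\<^sup>+x. ennreal (g x) * Mx x \<partial>lborel)"
proof -
  note [measurable] = BbD(1)[OF g]
  have ig: "integrable lborel g" using Bb_int[OF g] by simp
  have "ennreal (\<integral>x. g x \<partial>lborel) = ennreal (\<integral>y. Tk \<kappa> g y \<partial>lborel)"
    using T_mass[OF g] by simp
  also have "\<dots> = (\<integral>\<^sup>+y. ennreal (Tk \<kappa> g y) \<partial>lborel)"
    using T_mass(1)[OF g] T_nonneg[of g] gnn by (intro nn_integral_eq_integral[symmetric]) auto
  also have "\<dots> = (\<integral>\<^sup>+y. (\<integral>\<^sup>+x. ennreal (\<kappa> x y * g x) \<partial>lborel) \<partial>lborel)"
  proof (rule nn_integral_cong)
    fix y
    show "ennreal (Tk \<kappa> g y) = (\<integral>\<^sup>+x. ennreal (\<kappa> x y * g x) \<partial>lborel)"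
      unfolding Tk_def using T_int[OF BbD(1)[OF g] ig, of y] gnn \<kappa>_nn
      by (intro nn_integral_eq_integral[symmetric]) auto
  qed
  also have "\<dots> = (\<integral>\<^sup>+x. (\<integral>\<^sup>+y. ennreal (\<kappa> x y * g x) \<partial>lborel) \<partial>lborel)"
    by (rule lborel_pair.Fubini') measurable
  also have "\<dots> = (\<integral>\<^sup>+x. ennreal (g x) * Mx x \<partial>lborel)"
    unfolding Mx_def using gnn \<kappa>_nn
    by (simp add: nn_integral_cmult[symmetric] ennreal_mult mult.commute)
  finally show ?thesis .
qed

lemma Mx_le1: "AE x in lborel. Mx x \<le> 1"
proof -
  have AEn: "AE x in lborel. x \<notin> {x \<in> cball 0 (real n). 1 < Mx x}" for n :: nat
  proof -
    define S where "S = {x \<in> cball 0 (real n). 1 < Mx x}"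
    have S[measurable]: "S \<in> sets borel" unfolding S_def by measurable
    have gB: "(\<lambda>x. indicator S x :: real) \<in> Bb D"
      by (rule ind_Bb[OF Dm S]) (auto simp: S_def)
    have "S \<subseteq> cball 0 (real n)" by (auto simp: S_def)
    then have "emeasure lborel S \<le> emeasure lborel (cball (0::'a) (real n))"
      by (rule emeasure_mono) simp
    then have fin: "emeasure lborel S < \<infinity>"
      using emeasure_lborel_cball_finite[of "0::'a" "real n"] by (rule le_less_trans)
    have eq: "emeasure lborel S = (\<integral>\<^sup>+x. ennreal (indicator S x) * Mx x \<partial>lborel)"
    proof -
      have "emeasure lborel S = ennreal (\<integral>x. indicator S x \<partial>lborel)"
        using fin by (simp add: emeasure_eq_ennreal_measure less_top)
      also have "\<dots> = (\<integral>\<^sup>+x. ennreal (indicator S x) * Mx x \<partial>lborel)"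
        by (rule mass_eq[OF gB]) simp
      finally show ?thesis .
    qed
    have m1: "(indicator S :: 'a \<Rightarrow> ennreal) \<in> borel_measurable lborel" by measurable
    have m2: "(\<lambda>x. ennreal (indicator S x) * Mx x) \<in> borel_measurable lborel" by measurable
    have "AE x in lborel. x \<notin> S"
    proof (rule ccontr)
      assume na: "\<not> (AE x in lborel. x \<notin> S)"
      have "(\<integral>\<^sup>+x. indicator S x \<partial>lborel) < (\<integral>\<^sup>+x. ennreal (indicator S x) * Mx x \<partial>lborel)"
      proof (rule nn_integral_less)
        show "(\<integral>\<^sup>+x. indicator S x \<partial>lborel) \<noteq> \<infinity>" using fin by simp
        show "AE x in lborel. indicator S x \<le> ennreal (indicator S x) * Mx x"
          by (rule AE_I2) (auto simp: S_def indicator_def less_imp_le)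
        show "\<not> (AE x in lborel. ennreal (indicator S x) * Mx x \<le> indicator S x)"
        proof
          assume "AE x in lborel. ennreal (indicator S x) * Mx x \<le> indicator S x"
          then have "AE x in lborel. x \<notin> S"
            by eventually_elim (auto simp: S_def indicator_def)
          with na show False by simp
        qed
      qed (rule m1, rule m2)
      with eq show False by simp
    qed
    then show ?thesis by (simp add: S_def)
  qed
  have "AE x in lborel. \<forall>n::nat. x \<notin> {x \<in> cball 0 (real n). 1 < Mx x}"
    unfolding AE_all_countable using AEn by blast
  then show ?thesis
  proof eventually_elim
    case (elim x)
    obtain n :: nat where "norm x \<le> real n" using real_arch_simple by blast
    with elim[rule_format, of n] show ?case by (auto simp: not_less)
  qed
qed

lemma amgm: assumes "0 < e" shows "2 * u * v \<le> e * u^2 + v^2 / (e::real)"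
proof -
  have "0 \<le> (e * u - v)^2" by simp
  then have "2 * e * u * v \<le> e^2 * u^2 + v^2" by (simp add: power2_eq_square algebra_simps)
  have "2 * u * v = (2 * e * u * v) / e" using assms by simp
  also have "\<dots> \<le> (e^2 * u^2 + v^2) / e"
    using \<open>2 * e * u * v \<le> e^2 * u^2 + v^2\<close> assms by (intro divide_right_mono) auto
  also have "\<dots> = e * u^2 + v^2 / e" using assms by (simp add: field_simps power2_eq_square)
  finally show ?thesis .
qed

lemma Wf_split:
  assumes e: "0 < e" shows "Wf y \<le> (1 + e) * Wf c + (1 + 1/e) * Wf (y - c)"
proof -
  have n: "norm y \<le> norm c + norm (y - c)" using norm_triangle_ineq[of c "y - c"] by simp
  have "(norm y)^2 \<le> (norm c + norm (y - c))^2" using n by (simp add: power_mono)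
  also have "\<dots> = (norm c)^2 + 2 * norm c * norm (y - c) + (norm (y - c))^2"
    by (simp add: power2_eq_square algebra_simps)
  also have "\<dots> \<le> (norm c)^2 + (e * (norm c)^2 + (norm (y - c))^2 / e) + (norm (y - c))^2"
    using amgm[OF e, of "norm c" "norm (y - c)"] by linarith
  also have "\<dots> = (1 + e) * (norm c)^2 + (1 + 1/e) * (norm (y - c))^2"
    by (simp add: algebra_simps)
  finally show ?thesis by (simp add: Wf_def)
qed

lemma G2_fin:
  "(\<integral>\<^sup>+z. ennreal (Wf z * exp (- lam0 * (norm (z::'a))^2)) \<partial>lborel) < \<infinity>"
proof -
  have pt: "Wf z * exp (- lam0 * (norm z)^2) \<le> (2/lam0) * exp (- (lam0/2) * (norm z)^2)" for z :: 'a
  proof -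
    define t where "t = (norm z)^2"
    have t0: "0 \<le> t" by (simp add: t_def)
    have "lam0 * t / 2 \<le> exp (lam0 * t / 2)"
      using exp_ge_add_one_self[of "lam0 * t / 2"] by linarith
    then have "t \<le> (2/lam0) * exp (lam0 * t / 2)" using lam0 by (simp add: field_simps)
    then have "t * exp (- lam0 * t) \<le> (2/lam0) * exp (lam0 * t / 2) * exp (- lam0 * t)"
      by (rule mult_right_mono) simp
    also have "\<dots> = (2/lam0) * exp (- (lam0/2) * t)"
      by (simp add: mult.assoc exp_add[symmetric])
    finally show ?thesis by (simp add: Wf_def t_def)
  qed
  have "(\<integral>\<^sup>+z. ennreal (Wf z * exp (- lam0 * (norm (z::'a))^2)) \<partial>lborel)
      \<le> (\<integral>\<^sup>+z. ennreal (2/lam0) * ennreal (exp (- (lam0/2) * (norm (z::'a))^2)) \<partial>lborel)"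
    using pt lam0 by (intro nn_integral_mono) (simp add: ennreal_mult[symmetric] ennreal_leI)
  also have "\<dots> = ennreal (2/lam0) * (\<integral>\<^sup>+z. ennreal (exp (- (lam0/2) * (norm (z::'a))^2)) \<partial>lborel)"
    by (rule nn_integral_cmult) measurable
  also have "\<dots> < \<infinity>"
    using gauss_nn_fin[of "lam0/2", where 'a='a] lam0 by (simp add: ennreal_mult_less_top)
  finally show ?thesis .
qed

lemma lyap:
  obtains \<gamma> K where "0 \<le> \<gamma>" "\<gamma> < 1" "1 \<le> K"
    "AE x in lborel. (\<integral>\<^sup>+y. ennreal (Wf y * \<kappa> x y) \<partial>lborel) \<le> ennreal (\<gamma> * Wf x + K)"
proof -
  define G2 where "G2 = (\<integral>\<^sup>+z. ennreal (Wf z * exp (- lam0 * (norm (z::'a))^2)) \<partial>lborel)"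
  obtain G2r where G2r: "G2 = ennreal G2r" "0 \<le> G2r"
    using G2_fin unfolding G2_def by (auto simp: less_top_ennreal)
  define e where "e = (1 - a) / 2"
  have e: "0 < e" using a by (simp add: e_def)
  define \<gamma> where "\<gamma> = (1 + e) * a"
  define K where "K = (1 + e) * A + (1 + 1/e) * C0 * G2r + 1"
  have \<gamma>: "0 \<le> \<gamma>" "\<gamma> < 1"
  proof -
    show "0 \<le> \<gamma>" using a e by (simp add: \<gamma>_def)
    have "(1 + e) * a = a + a * (1 - a) / 2" by (simp add: e_def algebra_simps)
    also have "\<dots> < 1"
    proof -
      have "a * (1 - a) \<le> 1 * (1 - a)" using a by (intro mult_right_mono) auto
      then show ?thesis using a by (simp add: field_simps)
    qed
    finally show "\<gamma> < 1" by (simp add: \<gamma>_def)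
  qed
  have K: "1 \<le> K"
    using e A C0 G2r(2) by (simp add: K_def)
  have tr: "(\<integral>\<^sup>+y. ennreal (Wf (y - c) * exp (- lam0 * (norm (y - c))^2)) \<partial>lborel) = G2" for c :: 'a
    unfolding G2_def
    by (rule nn_integral_translate[where f="\<lambda>z. ennreal (Wf z * exp (- lam0 * (norm z)^2))"]) measurable
  have "AE x in lborel. (\<integral>\<^sup>+y. ennreal (Wf y * \<kappa> x y) \<partial>lborel) \<le> ennreal (\<gamma> * Wf x + K)"
    using Mx_le1
  proof eventually_elim
    case (elim x)
    define c where "c = \<theta>1 x"
    have pt: "ennreal (Wf y * \<kappa> x y) \<le> ennreal ((1 + e) * Wf c) * ennreal (\<kappa> x y)
       + ennreal ((1 + 1/e) * C0) * ennreal (Wf (y - c) * exp (- lam0 * (norm (y - c))^2))" for y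
    proof -
      have u: "\<kappa> x y \<le> C0 * exp (- lam0 * (norm (y - c))^2)"
        using upper[of x y] by (simp add: c_def norm_minus_commute)
      have "Wf y * \<kappa> x y \<le> ((1 + e) * Wf c + (1 + 1/e) * Wf (y - c)) * \<kappa> x y"
        using Wf_split[OF e, of y c] \<kappa>_nn by (rule mult_right_mono)
      also have "\<dots> = (1 + e) * Wf c * \<kappa> x y + (1 + 1/e) * Wf (y - c) * \<kappa> x y"
        by (simp add: algebra_simps)
      also have "\<dots> \<le> (1 + e) * Wf c * \<kappa> x y + (1 + 1/e) * Wf (y - c) * (C0 * exp (- lam0 * (norm (y - c))^2))"
        using u e by (intro add_left_mono mult_left_mono) auto
      also have "\<dots> = (1 + e) * Wf c * \<kappa> x y + ((1 + 1/e) * C0) * (Wf (y - c) * exp (- lam0 * (norm (y - c))^2))"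
        by (simp add: algebra_simps)
      finally have r: "Wf y * \<kappa> x y \<le> (1 + e) * Wf c * \<kappa> x y + ((1 + 1/e) * C0) * (Wf (y - c) * exp (- lam0 * (norm (y - c))^2))" .
      have nn: "0 \<le> (1 + e) * Wf c" "0 \<le> (1 + 1/e) * C0" "0 \<le> Wf (y - c) * exp (- lam0 * (norm (y - c))^2)"
        using e C0 by auto
      show ?thesis
        using r nn \<kappa>_nn[of x y]
        by (simp add: ennreal_mult[symmetric] ennreal_plus[symmetric] ennreal_leI del: ennreal_plus)
    qed
    have "(\<integral>\<^sup>+y. ennreal (Wf y * \<kappa> x y) \<partial>lborel)
       \<le> (\<integral>\<^sup>+y. ennreal ((1 + e) * Wf c) * ennreal (\<kappa> x y)
       + ennreal ((1 + 1/e) * C0) * ennreal (Wf (y - c) * exp (- lam0 * (norm (y - c))^2)) \<partial>lborel)"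
      by (intro nn_integral_mono pt)
    also have "\<dots> = ennreal ((1 + e) * Wf c) * Mx x + ennreal ((1 + 1/e) * C0) * G2"
      unfolding Mx_def tr[of c, symmetric]
      by (subst nn_integral_add) (auto simp: nn_integral_cmult)
    also have "\<dots> \<le> ennreal ((1 + e) * Wf c) * 1 + ennreal ((1 + 1/e) * C0) * ennreal G2r"
      using elim G2r by (intro add_mono mult_left_mono) auto
    also have "\<dots> = ennreal ((1 + e) * Wf c + (1 + 1/e) * C0 * G2r)"
      using e C0 G2r by (simp add: ennreal_mult[symmetric] ennreal_plus[symmetric] del: ennreal_plus)
    also have "\<dots> \<le> ennreal (\<gamma> * Wf x + K)"
    proof (rule ennreal_leI)
      have "Wf c \<le> a * Wf x + A" using flowb[of x] by (simp add: Wf_def c_def)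
      then have "(1 + e) * Wf c \<le> (1 + e) * (a * Wf x + A)" using e by (intro mult_left_mono) auto
      then show "(1 + e) * Wf c + (1 + 1/e) * C0 * G2r \<le> \<gamma> * Wf x + K"
        by (simp add: \<gamma>_def K_def algebra_simps)
    qed
    finally show ?case .
  qed
  then show ?thesis using that \<gamma> K by blast
qed

lemma minor:
  assumes R: "0 \<le> R"
  obtains \<eta>0 where "0 < \<eta>0" "\<And>x y. Wf x \<le> R \<Longrightarrow> norm y \<le> 1 \<Longrightarrow> \<eta>0 \<le> \<kappa> x y"
proof -
  define s where "s = sqrt (a * R + A)"
  define \<eta>0 where "\<eta>0 = exp (- ((s + 1)^2) / lam0) / C0"
  have "0 < \<eta>0" using C0 by (simp add: \<eta>0_def)
  moreover have "\<eta>0 \<le> \<kappa> x y" if "Wf x \<le> R" "norm y \<le> 1" for x y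
  proof -
    have "(norm (\<theta>1 x))^2 \<le> a * R + A"
      using flowb[of x] that(1) a by (smt (verit) Wf_def mult_left_mono)
    then have n1: "norm (\<theta>1 x) \<le> s" unfolding s_def by (rule real_le_rsqrt)
    have "norm (\<theta>1 x - y) \<le> norm (\<theta>1 x) + norm y" by (rule norm_triangle_ineq4)
    also have "\<dots> \<le> s + 1" using n1 that(2) by simp
    finally have "(norm (\<theta>1 x - y))^2 \<le> (s + 1)^2" by (simp add: power_mono)
    then have "- ((s + 1)^2) / lam0 \<le> - ((norm (\<theta>1 x - y))^2) / lam0"
      using lam0 by (simp add: divide_right_mono)
    then have "exp (- ((s + 1)^2) / lam0) / C0 \<le> exp (- ((norm (\<theta>1 x - y))^2) / lam0) / C0"
      using C0 by (intro divide_right_mono) auto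
    then show ?thesis using lower[of x y] unfolding \<eta>0_def by linarith
  qed
  ultimately show ?thesis using that by blast
qed

end

locale base2 = base +
  fixes \<gamma> K :: real
  assumes \<gamma>: "0 \<le> \<gamma>" "\<gamma> < 1" and K: "1 \<le> K"
    and lyapAE: "AE x in lborel. (\<integral>\<^sup>+y. ennreal (Wf y * \<kappa> x y) \<partial>lborel) \<le> ennreal (\<gamma> * Wf x + K)"
begin

lemma wbound:
  assumes f: "f \<in> Bb D"
  shows "(\<integral>\<^sup>+y. ennreal (Wf y * \<bar>Tk \<kappa> f y\<bar>) \<partial>lborel)
     \<le> ennreal (\<gamma> * (\<integral>x. Wf x * \<bar>f x\<bar> \<partial>lborel) + K * (\<integral>x. \<bar>f x\<bar> \<partial>lborel))"
proof -
  note [measurable] = BbD(1)[OF f]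
  have "(\<integral>\<^sup>+y. ennreal (Wf y * \<bar>Tk \<kappa> f y\<bar>) \<partial>lborel)
      \<le> (\<integral>\<^sup>+x. ennreal \<bar>f x\<bar> * (\<integral>\<^sup>+y. ennreal (Wf y * \<kappa> x y) \<partial>lborel) \<partial>lborel)"
    by (rule tonelli_w[OF \<kappa>m \<kappa>_nn BbD(1)[OF f] Wf_meas Wf_nonneg])
  also have "\<dots> \<le> (\<integral>\<^sup>+x. ennreal \<bar>f x\<bar> * ennreal (\<gamma> * Wf x + K) \<partial>lborel)"
    using lyapAE by (intro nn_integral_mono_AE) (auto elim!: eventually_mono intro: mult_left_mono)
  also have "\<dots> = (\<integral>\<^sup>+x. ennreal (\<gamma> * (Wf x * \<bar>f x\<bar>) + K * \<bar>f x\<bar>) \<partial>lborel)"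
    using \<gamma> K by (intro nn_integral_cong) (simp add: ennreal_mult[symmetric] algebra_simps)
  also have "\<dots> = ennreal (\<integral>x. \<gamma> * (Wf x * \<bar>f x\<bar>) + K * \<bar>f x\<bar> \<partial>lborel)"
    using Bb_int[OF f] \<gamma> K by (intro nn_integral_eq_integral) auto
  also have "\<dots> = ennreal (\<gamma> * (\<integral>x. Wf x * \<bar>f x\<bar> \<partial>lborel) + K * (\<integral>x. \<bar>f x\<bar> \<partial>lborel))"
    using Bb_int[OF f] by simp
  finally show ?thesis .
qed

lemma T_abs_le: "\<bar>Tk \<kappa> f y\<bar> \<le> Tk \<kappa> (\<lambda>x. \<bar>f x\<bar>) y"
proof (cases "integrable lborel (\<lambda>x. \<kappa> x y * f x)")
  case True
  have "\<bar>Tk \<kappa> f y\<bar> \<le> (\<integral>x. \<bar>\<kappa> x y * f x\<bar> \<partial>lborel)"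
    unfolding Tk_def by (rule integral_abs_bound)
  also have "\<dots> = Tk \<kappa> (\<lambda>x. \<bar>f x\<bar>) y"
    unfolding Tk_def using \<kappa>_nn by (simp add: abs_mult)
  finally show ?thesis .
next
  case False
  then show ?thesis by (simp add: Tk_def not_integrable_integral_eq T_nonneg[unfolded Tk_def])
qed

lemma L1bound:
  assumes f: "f \<in> Bb D"
  shows "integrable lborel (\<lambda>y. \<bar>Tk \<kappa> f y\<bar>)" "(\<integral>y. \<bar>Tk \<kappa> f y\<bar> \<partial>lborel) \<le> (\<integral>x. \<bar>f x\<bar> \<partial>lborel)"
proof -
  note [measurable] = BbD(1)[OF f]
  have fa: "(\<lambda>x. \<bar>f x\<bar>) \<in> Bb D" by (rule Bb_abs[OF Dm f])
  show "integrable lborel (\<lambda>y. \<bar>Tk \<kappa> f y\<bar>)" using T_mass(1)[OF f] by simp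
  have "(\<integral>y. \<bar>Tk \<kappa> f y\<bar> \<partial>lborel) \<le> (\<integral>y. Tk \<kappa> (\<lambda>x. \<bar>f x\<bar>) y \<partial>lborel)"
    using T_mass(1)[OF f] T_mass(1)[OF fa] T_abs_le by (intro integral_mono) auto
  also have "\<dots> = (\<integral>x. \<bar>f x\<bar> \<partial>lborel)" by (rule T_mass(2)[OF fa])
  finally show "(\<integral>y. \<bar>Tk \<kappa> f y\<bar> \<partial>lborel) \<le> (\<integral>x. \<bar>f x\<bar> \<partial>lborel)" .
qed

lemma Wbound:
  assumes f: "f \<in> Bb D"
  shows "integrable lborel (\<lambda>y. Wf y * \<bar>Tk \<kappa> f y\<bar>)"
    "(\<integral>y. Wf y * \<bar>Tk \<kappa> f y\<bar> \<partial>lborel) \<le> \<gamma> * (\<integral>x. Wf x * \<bar>f x\<bar> \<partial>lborel) + K * (\<integral>x. \<bar>f x\<bar> \<partial>lborel)"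
proof -
  note [measurable] = BbD(1)[OF f]
  have fin: "(\<integral>\<^sup>+y. ennreal (Wf y * \<bar>Tk \<kappa> f y\<bar>) \<partial>lborel) < \<infinity>"
    using wbound[OF f] by (rule le_less_trans) simp
  show i: "integrable lborel (\<lambda>y. Wf y * \<bar>Tk \<kappa> f y\<bar>)"
    using fin by (subst integrable_iff_bounded) (auto simp: abs_mult)
  have "ennreal (\<integral>y. Wf y * \<bar>Tk \<kappa> f y\<bar> \<partial>lborel) = (\<integral>\<^sup>+y. ennreal (Wf y * \<bar>Tk \<kappa> f y\<bar>) \<partial>lborel)"
    using i by (intro nn_integral_eq_integral[symmetric]) auto
  also have "\<dots> \<le> ennreal (\<gamma> * (\<integral>x. Wf x * \<bar>f x\<bar> \<partial>lborel) + K * (\<integral>x. \<bar>f x\<bar> \<partial>lborel))"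
    by (rule wbound[OF f])
  finally show "(\<integral>y. Wf y * \<bar>Tk \<kappa> f y\<bar> \<partial>lborel) \<le> \<gamma> * (\<integral>x. Wf x * \<bar>f x\<bar> \<partial>lborel) + K * (\<integral>x. \<bar>f x\<bar> \<partial>lborel)"
    using \<gamma> K by (subst (asm) ennreal_le_iff) (auto intro!: add_nonneg_nonneg mult_nonneg_nonneg integral_nonneg_AE)
qed

lemma T_Bb:
  assumes f: "f \<in> Bb D"
  shows "Tk \<kappa> f \<in> Bb D"
proof -
  note [measurable] = BbD(1)[OF f]
  have i1: "integrable lborel (\<lambda>y. \<bar>Tk \<kappa> f y\<bar> + Wf y * \<bar>Tk \<kappa> f y\<bar>)"
    using L1bound(1)[OF f] Wbound(1)[OF f] by auto
  have 1: "integrable lborel (\<lambda>y. (1 + Wf y) * Tk \<kappa> f y)"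
  proof (rule Bochner_Integration.integrable_bound[OF i1])
    show "AE y in lborel. norm ((1 + Wf y) * Tk \<kappa> f y) \<le> norm (\<bar>Tk \<kappa> f y\<bar> + Wf y * \<bar>Tk \<kappa> f y\<bar>)"
    proof (rule AE_I2)
      fix y :: 'a
      have h: "\<bar>1 + Wf y\<bar> = 1 + Wf y" using Wf_nonneg[of y] by simp
      have e1: "\<bar>(1 + Wf y) * Tk \<kappa> f y\<bar> = (1 + Wf y) * \<bar>Tk \<kappa> f y\<bar>" by (simp only: abs_mult h)
      have e2: "(1 + Wf y) * \<bar>Tk \<kappa> f y\<bar> = \<bar>Tk \<kappa> f y\<bar> + Wf y * \<bar>Tk \<kappa> f y\<bar>" by (simp add: distrib_right)
      show "norm ((1 + Wf y) * Tk \<kappa> f y) \<le> norm (\<bar>Tk \<kappa> f y\<bar> + Wf y * \<bar>Tk \<kappa> f y\<bar>)"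
        unfolding real_norm_def e1 e2 by simp
    qed
  qed measurable
  define c where "c = C0 * (\<integral>x. \<bar>f x\<bar> \<partial>lborel)"
  have i2: "integrable lborel (\<lambda>y. c^2 * indicator D y)"
    using Dfin by (intro Bochner_Integration.integrable_mult_right integrable_real_indicator) auto
  have 2: "integrable lborel (\<lambda>y. (indicator D y * Tk \<kappa> f y)^2)"
  proof (rule Bochner_Integration.integrable_bound[OF i2])
    show "(\<lambda>y. (indicator D y * Tk \<kappa> f y)^2) \<in> borel_measurable lborel" by measurable
    show "AE y in lborel. norm ((indicator D y * Tk \<kappa> f y)^2) \<le> norm (c^2 * indicator D y)"
    proof (rule AE_I2)
      fix y :: 'a
      have tb: "\<bar>Tk \<kappa> f y\<bar> \<le> c" unfolding c_def by (rule T_bound) (auto simp: Bb_int[OF f])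
      have "(Tk \<kappa> f y)^2 \<le> c^2" using power_mono[OF tb abs_ge_zero, of 2] by simp
      then show "norm ((indicator D y * Tk \<kappa> f y)^2) \<le> norm (c^2 * indicator D y)"
        by (auto simp: indicator_def)
    qed
  qed
  show ?thesis using 1 2 by (auto simp: Bb_def)
qed

end


context base2
begin

lemma contr_core:
  assumes f: "f \<in> Bb D" and f0: "(\<integral>x. f x \<partial>lborel) = 0"
    and R: "0 < R" and e0: "0 < \<eta>0"
    and mn: "\<And>x y. Wf x \<le> R \<Longrightarrow> norm y \<le> 1 \<Longrightarrow> \<eta>0 \<le> \<kappa> x y"
  defines "S \<equiv> (\<integral>x. \<bar>f x\<bar> \<partial>lborel)" and "J \<equiv> (\<integral>x. Wf x * \<bar>f x\<bar> \<partial>lborel)"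
    and "B1 \<equiv> measure lborel (cball (0::'a) 1)"
  shows "(\<integral>y. \<bar>Tk \<kappa> f y\<bar> \<partial>lborel) \<le> S"
    "(\<integral>y. \<bar>Tk \<kappa> f y\<bar> \<partial>lborel) \<le> S - \<eta>0 * B1 * S / 2 \<or> R * S / 4 \<le> J"
proof -
  note fm[measurable] = BbD(1)[OF f]
  show "(\<integral>y. \<bar>Tk \<kappa> f y\<bar> \<partial>lborel) \<le> S" unfolding S_def by (rule L1bound(2)[OF f])
  define C where "C = {x::'a. Wf x \<le> R}"
  have Cm[measurable]: "C \<in> sets borel" unfolding C_def by measurable
  have Cc[measurable]: "- C \<in> sets borel" using Cm by auto
  define fp where "fp = (\<lambda>x. max (f x) 0)"
  define fn where "fn = (\<lambda>x. max (- f x) 0)"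
  define p where "p = (\<lambda>x. indicator C x * fp x)"
  define p2 where "p2 = (\<lambda>x. indicator (- C) x * fp x)"
  define q where "q = (\<lambda>x. indicator C x * fn x)"
  define q2 where "q2 = (\<lambda>x. indicator (- C) x * fn x)"
  have fpB: "fp \<in> Bb D" "fn \<in> Bb D" unfolding fp_def fn_def using Bb_pos[OF Dm f] by auto
  have pB: "p \<in> Bb D" "p2 \<in> Bb D" "q \<in> Bb D" "q2 \<in> Bb D"
    unfolding p_def p2_def q_def q2_def using fpB Cm Cc by (auto intro!: Bb_ind[OF Dm])
  note pm[measurable] = BbD(1)[OF pB(1)] BbD(1)[OF pB(2)] BbD(1)[OF pB(3)] BbD(1)[OF pB(4)]
  have pi: "integrable lborel p" "integrable lborel p2" "integrable lborel q" "integrable lborel q2"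
    using pB by (auto intro: Bb_int)
  have pnn: "0 \<le> p x" "0 \<le> p2 x" "0 \<le> q x" "0 \<le> q2 x" for x
    by (auto simp: p_def p2_def q_def q2_def fp_def fn_def)
  have fdec: "f x = p x + p2 x - q x - q2 x" for x
    by (auto simp: p_def p2_def q_def q2_def fp_def fn_def indicator_def)
  have fabs: "\<bar>f x\<bar> = p x + p2 x + q x + q2 x" for x
    by (auto simp: p_def p2_def q_def q2_def fp_def fn_def indicator_def)
  define Ip where "Ip = (\<integral>x. p x \<partial>lborel)"
  define Ip2 where "Ip2 = (\<integral>x. p2 x \<partial>lborel)"
  define Iq where "Iq = (\<integral>x. q x \<partial>lborel)"
  define Iq2 where "Iq2 = (\<integral>x. q2 x \<partial>lborel)"
  have Inn: "0 \<le> Ip" "0 \<le> Ip2" "0 \<le> Iq" "0 \<le> Iq2"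
    unfolding Ip_def Ip2_def Iq_def Iq2_def using pnn by (auto intro: integral_nonneg_AE)
  have Sdec: "S = Ip + Ip2 + Iq + Iq2"
    unfolding S_def fabs Ip_def Ip2_def Iq_def Iq2_def using pi by simp
  have fdec0: "Ip + Ip2 - Iq - Iq2 = 0"
    using f0 unfolding fdec Ip_def Ip2_def Iq_def Iq2_def using pi by simp
  have Jlow: "R * (Ip2 + Iq2) \<le> J"
  proof -
    have "R * (Ip2 + Iq2) = (\<integral>x. R * (p2 x + q2 x) \<partial>lborel)"
      unfolding Ip2_def Iq2_def using pi by simp
    also have "\<dots> \<le> (\<integral>x. Wf x * \<bar>f x\<bar> \<partial>lborel)"
    proof (rule integral_mono)
      show "integrable lborel (\<lambda>x. R * (p2 x + q2 x))" using pi by simp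
      show "integrable lborel (\<lambda>x. Wf x * \<bar>f x\<bar>)" by (rule Bb_int(3)[OF f])
      fix x
      have "R * (p2 x + q2 x) \<le> Wf x * (p2 x + q2 x)"
        by (cases "x \<in> C") (auto simp: p2_def q2_def C_def intro!: mult_right_mono add_nonneg_nonneg simp: fp_def fn_def)
      also have "\<dots> \<le> Wf x * \<bar>f x\<bar>" unfolding fabs using pnn by (intro mult_left_mono) auto
      finally show "R * (p2 x + q2 x) \<le> Wf x * \<bar>f x\<bar>" .
    qed
    finally show ?thesis unfolding J_def .
  qed
  define \<mu> where "\<mu> = min Ip Iq"
  define \<nu> where "\<nu> = (\<lambda>y. indicator (cball (0::'a) 1) y :: real)"
  have minT: "\<eta>0 * I * \<nu> y \<le> Tk \<kappa> g y"
    if g: "g \<in> Bb D" "\<And>x. 0 \<le> g x" "\<And>x. x \<notin> C \<Longrightarrow> g x = 0" and I: "I = (\<integral>x. g x \<partial>lborel)" for g I y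
  proof (cases "norm y \<le> 1")
    case True
    note [measurable] = BbD(1)[OF g(1)]
    have "\<eta>0 * I = (\<integral>x. \<eta>0 * g x \<partial>lborel)" unfolding I by simp
    also have "\<dots> \<le> Tk \<kappa> g y" unfolding Tk_def
    proof (rule integral_mono)
      show "integrable lborel (\<lambda>x. \<eta>0 * g x)" using Bb_int(1)[OF g(1)] by simp
      show "integrable lborel (\<lambda>x. \<kappa> x y * g x)" using T_int Bb_int(1)[OF g(1)] by simp
      fix x show "\<eta>0 * g x \<le> \<kappa> x y * g x"
        using mn[of x y] True g(2)[of x] g(3)[of x] by (cases "x \<in> C") (auto simp: C_def intro: mult_right_mono)
    qed
    finally show ?thesis using True by (simp add: \<nu>_def)
  next
    case False
    then show ?thesis using T_nonneg[of g y] g(2) by (simp add: \<nu>_def)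
  qed
  have Tp_low: "\<eta>0 * \<mu> * \<nu> y \<le> Tk \<kappa> p y" for y
  proof -
    have "\<eta>0 * \<mu> * \<nu> y \<le> \<eta>0 * Ip * \<nu> y"
      using e0 by (intro mult_right_mono mult_left_mono) (auto simp: \<mu>_def \<nu>_def)
    also have "\<dots> \<le> Tk \<kappa> p y"
      by (rule minT[OF pB(1) pnn(1)]) (auto simp: p_def Ip_def)
    finally show ?thesis .
  qed
  have Tq_low: "\<eta>0 * \<mu> * \<nu> y \<le> Tk \<kappa> q y" for y
  proof -
    have "\<eta>0 * \<mu> * \<nu> y \<le> \<eta>0 * Iq * \<nu> y"
      using e0 by (intro mult_right_mono mult_left_mono) (auto simp: \<mu>_def \<nu>_def)
    also have "\<dots> \<le> Tk \<kappa> q y"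
      by (rule minT[OF pB(3) pnn(3)]) (auto simp: q_def Iq_def)
    finally show ?thesis .
  qed
  have Tdec: "Tk \<kappa> f y = Tk \<kappa> p y + Tk \<kappa> p2 y - Tk \<kappa> q y - Tk \<kappa> q2 y" for y
  proof -
    have "f = (\<lambda>x. ((p x + p2 x) - q x) - q2 x)" using fdec by auto
    then have "Tk \<kappa> f y = Tk \<kappa> (\<lambda>x. ((p x + p2 x) - q x) - q2 x) y" by simp
    also have "\<dots> = Tk \<kappa> (\<lambda>x. (p x + p2 x) - q x) y - Tk \<kappa> q2 y"
      using pi by (intro T_diff) auto
    also have "\<dots> = Tk \<kappa> (\<lambda>x. p x + p2 x) y - Tk \<kappa> q y - Tk \<kappa> q2 y"
      using pi by (subst T_diff) auto
    also have "\<dots> = Tk \<kappa> p y + Tk \<kappa> p2 y - Tk \<kappa> q y - Tk \<kappa> q2 y"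
      using pi by (subst T_add) auto
    finally show ?thesis .
  qed
  have ptw: "\<bar>Tk \<kappa> f y\<bar> \<le> Tk \<kappa> p y + Tk \<kappa> p2 y + Tk \<kappa> q y + Tk \<kappa> q2 y - 2 * (\<eta>0 * \<mu> * \<nu> y)" for y
  proof -
    have a1: "0 \<le> Tk \<kappa> p y - \<eta>0 * \<mu> * \<nu> y" using Tp_low[of y] by simp
    have a2: "0 \<le> Tk \<kappa> q y - \<eta>0 * \<mu> * \<nu> y" using Tq_low[of y] by simp
    have a3: "0 \<le> Tk \<kappa> p2 y" "0 \<le> Tk \<kappa> q2 y" using pnn by (auto intro: T_nonneg)
    have "Tk \<kappa> f y = (Tk \<kappa> p y - \<eta>0 * \<mu> * \<nu> y) + Tk \<kappa> p2 y - (Tk \<kappa> q y - \<eta>0 * \<mu> * \<nu> y) - Tk \<kappa> q2 y"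
      unfolding Tdec by simp
    then show ?thesis using a1 a2 a3 by linarith
  qed
  have Tint: "integrable lborel (Tk \<kappa> p)" "integrable lborel (Tk \<kappa> p2)"
    "integrable lborel (Tk \<kappa> q)" "integrable lborel (Tk \<kappa> q2)"
    using pB by (auto intro: T_mass(1))
  have Tmass: "(\<integral>y. Tk \<kappa> p y \<partial>lborel) = Ip" "(\<integral>y. Tk \<kappa> p2 y \<partial>lborel) = Ip2"
    "(\<integral>y. Tk \<kappa> q y \<partial>lborel) = Iq" "(\<integral>y. Tk \<kappa> q2 y \<partial>lborel) = Iq2"
    unfolding Ip_def Ip2_def Iq_def Iq2_def using pB by (auto intro: T_mass(2))
  have nuint: "integrable lborel \<nu>" "(\<integral>y. \<nu> y \<partial>lborel) = B1"
    unfolding \<nu>_def B1_def using emeasure_lborel_cball_finite[of "0::'a" 1] by auto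
  have L1: "(\<integral>y. \<bar>Tk \<kappa> f y\<bar> \<partial>lborel) \<le> S - 2 * \<eta>0 * \<mu> * B1"
  proof -
    have "(\<integral>y. \<bar>Tk \<kappa> f y\<bar> \<partial>lborel)
        \<le> (\<integral>y. Tk \<kappa> p y + Tk \<kappa> p2 y + Tk \<kappa> q y + Tk \<kappa> q2 y - 2 * (\<eta>0 * \<mu> * \<nu> y) \<partial>lborel)"
      using L1bound(1)[OF f] Tint nuint by (intro integral_mono ptw) auto
    also have "\<dots> = Ip + Ip2 + Iq + Iq2 - 2 * \<eta>0 * \<mu> * B1"
      using Tint nuint Tmass by simp
    finally show ?thesis unfolding Sdec .
  qed
  have B1nn: "0 \<le> B1" unfolding B1_def by simp
  show "(\<integral>y. \<bar>Tk \<kappa> f y\<bar> \<partial>lborel) \<le> S - \<eta>0 * B1 * S / 2 \<or> R * S / 4 \<le> J"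
  proof (cases "S / 4 \<le> \<mu>")
    case True
    have "\<eta>0 * B1 * S / 2 \<le> 2 * \<eta>0 * \<mu> * B1"
      using True e0 B1nn by (simp add: mult_left_mono mult_right_mono mult.assoc mult.left_commute)
    then show ?thesis using L1 by linarith
  next
    case False
    then have "Ip < S / 4 \<or> Iq < S / 4" by (auto simp: \<mu>_def min_def split: if_splits)
    then have "S / 4 \<le> Ip2 + Iq2" using Sdec fdec0 Inn by linarith
    then have "R * (S / 4) \<le> R * (Ip2 + Iq2)" using R by (intro mult_left_mono) auto
    then show ?thesis using Jlow by simp
  qed
qed

lemma nb_split:
  assumes f: "f \<in> Bb D" and b: "0 \<le> \<beta>"
  shows "nb \<beta> f = (\<integral>x. \<bar>f x\<bar> \<partial>lborel) + \<beta> * (\<integral>x. Wf x * \<bar>f x\<bar> \<partial>lborel)"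
proof -
  have "nb \<beta> f = (\<integral>x. \<bar>f x\<bar> + \<beta> * (Wf x * \<bar>f x\<bar>) \<partial>lborel)"
    unfolding nb_def by (rule Bochner_Integration.integral_cong) (auto simp: algebra_simps)
  also have "\<dots> = (\<integral>x. \<bar>f x\<bar> \<partial>lborel) + \<beta> * (\<integral>x. Wf x * \<bar>f x\<bar> \<partial>lborel)"
    using Bb_int[OF f] by simp
  finally show ?thesis .
qed

lemma contraction:
  obtains \<alpha> \<beta> where "0 < \<beta>" "0 \<le> \<alpha>" "\<alpha> < 1"
    "\<And>f. f \<in> Bb D \<Longrightarrow> (\<integral>x. f x \<partial>lborel) = 0 \<Longrightarrow> nb \<beta> (Tk \<kappa> f) \<le> \<alpha> * nb \<beta> f"
proof -
  have g1: "0 < 1 - \<gamma>" using \<gamma> by simp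
  define R where "R = 16 * K / (1 - \<gamma>) + 1"
  have R: "0 < R" using K g1 unfolding R_def by (simp add: add_pos_nonneg)
  obtain \<eta>0 where e0: "0 < \<eta>0" and mn: "\<And>x y. Wf x \<le> R \<Longrightarrow> norm y \<le> 1 \<Longrightarrow> \<eta>0 \<le> \<kappa> x y"
    using minor[of R] R by auto
  define B1 where "B1 = measure lborel (cball (0::'a) 1)"
  have B1: "0 < B1" unfolding B1_def by simp
  define \<eta> where "\<eta> = \<eta>0 * B1"
  have \<eta>: "0 < \<eta>" using e0 B1 by (simp add: \<eta>_def)
  define e where "e = min \<eta> (1 - \<gamma>)"
  have e: "0 < e" "e \<le> \<eta>" "e \<le> 1 - \<gamma>" using \<eta> g1 by (auto simp: e_def)
  define \<beta> where "\<beta> = e / (4 * K)"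
  define \<alpha> where "\<alpha> = 1 - e / 4"
  have \<beta>: "0 < \<beta>" using e K by (simp add: \<beta>_def)
  have \<beta>K: "\<beta> * K = e / 4" using K by (simp add: \<beta>_def)
  have \<alpha>: "0 \<le> \<alpha>" "\<alpha> < 1" using e \<gamma> by (auto simp: \<alpha>_def)
  have ag: "\<gamma> \<le> \<alpha>" using e \<gamma> by (simp add: \<alpha>_def)
  have agR: "8 * K \<le> (\<alpha> - \<gamma>) * R"
  proof -
    have h1: "3 * (1 - \<gamma>) / 4 \<le> \<alpha> - \<gamma>" using e by (simp add: \<alpha>_def)
    have h2: "16 * K / (1 - \<gamma>) \<le> R" by (simp add: R_def)
    have "3 * (1 - \<gamma>) / 4 * (16 * K / (1 - \<gamma>)) \<le> (\<alpha> - \<gamma>) * R"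
      using h1 h2 g1 K by (intro mult_mono) auto
    moreover have "3 * (1 - \<gamma>) / 4 * (16 * K / (1 - \<gamma>)) = 12 * K * ((1 - \<gamma>) / (1 - \<gamma>))"
      by (simp add: field_simps)
    moreover have "(1 - \<gamma>) / (1 - \<gamma>) = 1" using g1 by simp
    ultimately have "12 * K \<le> (\<alpha> - \<gamma>) * R" by simp
    then show ?thesis using K by linarith
  qed
  have main: "nb \<beta> (Tk \<kappa> f) \<le> \<alpha> * nb \<beta> f" if f: "f \<in> Bb D" and f0: "(\<integral>x. f x \<partial>lborel) = 0" for f
  proof -
    define S where "S = (\<integral>x. \<bar>f x\<bar> \<partial>lborel)"
    define J where "J = (\<integral>x. Wf x * \<bar>f x\<bar> \<partial>lborel)"
    define X where "X = (\<integral>y. \<bar>Tk \<kappa> f y\<bar> \<partial>lborel)"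
    define Y where "Y = (\<integral>y. Wf y * \<bar>Tk \<kappa> f y\<bar> \<partial>lborel)"
    have S0: "0 \<le> S" unfolding S_def by simp
    have J0: "0 \<le> J" unfolding J_def by (simp add: integral_nonneg_AE)
    have nbf: "nb \<beta> f = S + \<beta> * J" unfolding S_def J_def using nb_split[OF f] \<beta> by simp
    have nbT: "nb \<beta> (Tk \<kappa> f) = X + \<beta> * Y" unfolding X_def Y_def using nb_split[OF T_Bb[OF f]] \<beta> by simp
    have Y: "Y \<le> \<gamma> * J + K * S" unfolding Y_def J_def S_def by (rule Wbound(2)[OF f])
    have cc: "X \<le> S" "X \<le> S - \<eta>0 * B1 * S / 2 \<or> R * S / 4 \<le> J"
      using contr_core[OF f f0 R e0 mn] unfolding X_def S_def J_def B1_def by auto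
    have bY: "\<beta> * Y \<le> \<beta> * \<gamma> * J + e / 4 * S"
    proof -
      have "\<beta> * Y \<le> \<beta> * (\<gamma> * J + K * S)" using Y \<beta> by (intro mult_left_mono) auto
      also have "\<dots> = \<beta> * \<gamma> * J + (\<beta> * K) * S" by (simp add: algebra_simps)
      finally show ?thesis unfolding \<beta>K .
    qed
    have bgJ: "\<beta> * \<gamma> * J \<le> \<alpha> * (\<beta> * J)"
    proof -
      have "\<gamma> * (\<beta> * J) \<le> \<alpha> * (\<beta> * J)" using ag \<beta> J0 by (intro mult_right_mono) auto
      then show ?thesis by (simp add: algebra_simps)
    qed
    from cc(2) show ?thesis
    proof
      assume A: "X \<le> S - \<eta>0 * B1 * S / 2"
      have "e * S \<le> \<eta> * S" using e S0 by (intro mult_right_mono) auto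
      then have "X \<le> S - e * S / 2" using A unfolding \<eta>_def by linarith
      then have "X + \<beta> * Y \<le> S - e * S / 2 + \<beta> * \<gamma> * J + e / 4 * S" using bY by linarith
      also have "\<dots> \<le> \<alpha> * S + \<alpha> * (\<beta> * J)" using bgJ by (simp add: \<alpha>_def algebra_simps)
      finally show ?thesis unfolding nbT nbf by (simp add: algebra_simps)
    next
      assume B: "R * S / 4 \<le> J"
      have "e / 2 * S \<le> \<beta> * (\<alpha> - \<gamma>) * J"
      proof -
        have "e / 2 * S = \<beta> * (8 * K) * S / 4" using \<beta>K by (simp add: algebra_simps)
        also have "\<dots> \<le> \<beta> * ((\<alpha> - \<gamma>) * R) * S / 4"
          using agR \<beta> S0 by (intro divide_right_mono mult_right_mono mult_left_mono) auto
        also have "\<dots> = \<beta> * (\<alpha> - \<gamma>) * (R * S / 4)" by (simp add: algebra_simps)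
        also have "\<dots> \<le> \<beta> * (\<alpha> - \<gamma>) * J"
          using B \<beta> ag by (intro mult_left_mono) auto
        finally show ?thesis .
      qed
      then have "X + \<beta> * Y \<le> S + \<beta> * \<gamma> * J + e / 4 * S" using bY cc(1) by linarith
      also have "\<dots> \<le> \<alpha> * S + \<alpha> * (\<beta> * J)"
        using \<open>e / 2 * S \<le> \<beta> * (\<alpha> - \<gamma>) * J\<close> by (simp add: \<alpha>_def algebra_simps)
      finally show ?thesis unfolding nbT nbf by (simp add: algebra_simps)
    qed
  qed
  show ?thesis using that[OF \<beta> \<alpha> main] by blast
qed

end


locale pert = base2 +
  fixes kp :: "'a \<Rightarrow> 'a \<Rightarrow> real" and RD E2 :: real
  assumes kpm[measurable]: "(\<lambda>(x,y). kp x y) \<in> borel_measurable (lborel \<Otimes>\<^sub>M lborel)"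
    and kp_supp: "\<And>x y. (x, y) \<notin> D \<times> D \<Longrightarrow> kp x y = 0"
    and kpL2: "(\<integral>\<^sup>+z. ennreal ((kp (fst z) (snd z))^2) \<partial>(lborel \<Otimes>\<^sub>M lborel)) = ennreal E2"
    and E2: "0 \<le> E2"
    and DRD: "D \<subseteq> cball 0 RD"
    and presd: "\<And>g. g \<in> strong_space D \<Longrightarrow> integrable lebesgue (transfer (\<lambda>x y. \<kappa> x y + kp x y) g) \<and>
         (LINT y|lebesgue. transfer (\<lambda>x y. \<kappa> x y + kp x y) g y) = (LINT x|lebesgue. g x)"
begin

definition Ky :: "'a \<Rightarrow> ennreal" where "Ky y = (\<integral>\<^sup>+x. ennreal ((kp x y)^2) \<partial>lborel)"

lemma Ky_meas[measurable]: "Ky \<in> borel_measurable borel"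
proof -
  have "(\<lambda>y. \<integral>\<^sup>+x. ennreal ((kp x y)^2) \<partial>lborel) \<in> borel_measurable lborel"
    using lborel.borel_measurable_nn_integral_fst[of "\<lambda>z. ennreal ((kp (snd z) (fst z))^2)" lborel]
    by (simp add: case_prod_beta')
  then show ?thesis unfolding Ky_def[abs_def] by simp
qed

lemma Ky_int: "(\<integral>\<^sup>+y. Ky y \<partial>lborel) = ennreal E2"
proof -
  have "(\<integral>\<^sup>+y. Ky y \<partial>lborel) = (\<integral>\<^sup>+y. (\<integral>\<^sup>+x. ennreal ((kp (fst (x,y)) (snd (x,y)))^2) \<partial>lborel) \<partial>lborel)"
    unfolding Ky_def by simp
  also have "\<dots> = (\<integral>\<^sup>+z. ennreal ((kp (fst z) (snd z))^2) \<partial>(lborel \<Otimes>\<^sub>M lborel))"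
    by (rule lborel_pair.nn_integral_snd) measurable
  finally show ?thesis using kpL2 by simp
qed

lemma Ky_fin: "AE y in lborel. Ky y < \<infinity>"
proof -
  have "AE y in lborel. Ky y \<noteq> \<infinity>"
    by (rule nn_integral_PInf_AE) (auto simp: Ky_int)
  then show ?thesis by (simp add: less_top)
qed

definition Kr :: "'a \<Rightarrow> real" where "Kr y = enn2real (Ky y)"

lemma kp_sec[measurable]: "(\<lambda>x. kp x y) \<in> borel_measurable borel"
  by measurable

lemma Kr_eq:
  assumes "Ky y < \<infinity>"
  shows "integrable lborel (\<lambda>x. (kp x y)^2)" "Kr y = (\<integral>x. (kp x y)^2 \<partial>lborel)" "Ky y = ennreal (Kr y)"
proof -
  show i: "integrable lborel (\<lambda>x. (kp x y)^2)"
    using assms by (subst integrable_iff_bounded) (auto simp: Ky_def)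
  have "Ky y = ennreal (\<integral>x. (kp x y)^2 \<partial>lborel)"
    unfolding Ky_def using i by (intro nn_integral_eq_integral) auto
  then show "Kr y = (\<integral>x. (kp x y)^2 \<partial>lborel)" by (simp add: Kr_def)
  then show "Ky y = ennreal (Kr y)" using \<open>Ky y = _\<close> by simp
qed

lemma Kr_nn: "0 \<le> Kr y" by (simp add: Kr_def)

lemma Qd_nn: "0 \<le> Qd D h" unfolding Qd_def by simp

lemma P_pt:
  assumes h: "h \<in> Bb D" and Ky: "Ky y < \<infinity>"
  shows "integrable lborel (\<lambda>x. kp x y * h x)"
    "(\<integral>x. \<bar>kp x y * h x\<bar> \<partial>lborel) \<le> sqrt (Kr y) * sqrt (Qd D h)"
proof -
  note [measurable] = BbD(1)[OF h]
  have eq: "kp x y * h x = kp x y * (indicator D x * h x)" for x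
    using kp_supp[of x y] by (auto simp: indicator_def)
  have m1: "(\<lambda>x. kp x y) \<in> borel_measurable lborel" by measurable
  have m2: "(\<lambda>x. indicator D x * h x) \<in> borel_measurable lborel" by measurable
  note cs = CS_real[OF m1 m2 Kr_eq(1)[OF Ky] BbD(3)[OF h]]
  show "integrable lborel (\<lambda>x. kp x y * h x)" unfolding eq by (rule cs(1))
  show "(\<integral>x. \<bar>kp x y * h x\<bar> \<partial>lborel) \<le> sqrt (Kr y) * sqrt (Qd D h)"
    unfolding eq Qd_def Kr_eq(2)[OF Ky] by (rule cs(2))
qed

definition P :: "('a \<Rightarrow> real) \<Rightarrow> 'a \<Rightarrow> real" where "P h = Tk kp h"
definition Ld :: "('a \<Rightarrow> real) \<Rightarrow> 'a \<Rightarrow> real" where "Ld h = Tk (\<lambda>x y. \<kappa> x y + kp x y) h"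

lemma P_meas[measurable]:
  assumes [measurable]: "f \<in> borel_measurable borel"
  shows "P f \<in> borel_measurable borel"
proof -
  have "(\<lambda>y. \<integral>x. kp x y * f x \<partial>lborel) \<in> borel_measurable lborel"
    by (rule lborel.borel_measurable_lebesgue_integral) measurable
  then show ?thesis by (simp add: P_def Tk_def[abs_def])
qed

lemma Ld_meas[measurable]:
  assumes [measurable]: "f \<in> borel_measurable borel"
  shows "Ld f \<in> borel_measurable borel"
proof -
  have "(\<lambda>y. \<integral>x. (\<kappa> x y + kp x y) * f x \<partial>lborel) \<in> borel_measurable lborel"
    by (rule lborel.borel_measurable_lebesgue_integral) measurable
  then show ?thesis by (simp add: Ld_def Tk_def[abs_def])
qed

lemma P_supp: "y \<notin> D \<Longrightarrow> P h y = 0"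
  using kp_supp by (simp add: P_def Tk_def)

lemma P_bound:
  assumes h: "h \<in> Bb D" and Ky: "Ky y < \<infinity>"
  shows "\<bar>P h y\<bar> \<le> sqrt (Kr y) * sqrt (Qd D h)"
proof -
  have "\<bar>P h y\<bar> \<le> (\<integral>x. \<bar>kp x y * h x\<bar> \<partial>lborel)"
    unfolding P_def Tk_def by (rule integral_abs_bound)
  also have "\<dots> \<le> sqrt (Kr y) * sqrt (Qd D h)" by (rule P_pt(2)[OF h Ky])
  finally show ?thesis .
qed

lemma Ld_split:
  assumes h: "h \<in> Bb D" and Ky: "Ky y < \<infinity>"
  shows "Ld h y = Tk \<kappa> h y + P h y"
proof -
  note [measurable] = BbD(1)[OF h]
  have "Ld h y = (\<integral>x. \<kappa> x y * h x + kp x y * h x \<partial>lborel)"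
    unfolding Ld_def Tk_def by (simp add: distrib_right)
  also have "\<dots> = Tk \<kappa> h y + P h y"
    unfolding P_def Tk_def using T_int[of h y] Bb_int(1)[OF h] P_pt(1)[OF h Ky] by simp
  finally show ?thesis .
qed

lemma Ld_split_AE:
  assumes h: "h \<in> Bb D"
  shows "AE y in lborel. Ld h y = Tk \<kappa> h y + P h y"
  using Ky_fin by eventually_elim (rule Ld_split[OF h])

lemma P_Q:
  assumes h: "h \<in> Bb D"
  shows "integrable lborel (\<lambda>y. (P h y)^2)" "(\<integral>y. (P h y)^2 \<partial>lborel) \<le> E2 * Qd D h"
proof -
  note [measurable] = BbD(1)[OF h]
  have pt: "AE y in lborel. ennreal ((P h y)^2) \<le> Ky y * ennreal (Qd D h)"
    using Ky_fin
  proof eventually_elim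
    case (elim y)
    have "\<bar>P h y\<bar> \<le> sqrt (Kr y) * sqrt (Qd D h)" by (rule P_bound[OF h elim])
    then have "\<bar>P h y\<bar>^2 \<le> (sqrt (Kr y) * sqrt (Qd D h))^2" by (rule power_mono) simp
    also have "\<dots> = Kr y * Qd D h" using Kr_nn Qd_nn by (simp add: power_mult_distrib)
    finally have "(P h y)^2 \<le> Kr y * Qd D h" by simp
    then have "ennreal ((P h y)^2) \<le> ennreal (Kr y * Qd D h)" by (rule ennreal_leI)
    also have "\<dots> = Ky y * ennreal (Qd D h)" using Kr_eq(3)[OF elim] Kr_nn Qd_nn by (simp add: ennreal_mult)
    finally show ?case .
  qed
  have "(\<integral>\<^sup>+y. ennreal ((P h y)^2) \<partial>lborel) \<le> (\<integral>\<^sup>+y. Ky y * ennreal (Qd D h) \<partial>lborel)"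
    by (rule nn_integral_mono_AE[OF pt])
  also have "\<dots> = ennreal (E2 * Qd D h)"
    by (simp add: nn_integral_multc Ky_int E2 Qd_nn ennreal_mult)
  finally have le: "(\<integral>\<^sup>+y. ennreal ((P h y)^2) \<partial>lborel) \<le> ennreal (E2 * Qd D h)" .
  show i: "integrable lborel (\<lambda>y. (P h y)^2)"
    using le by (subst integrable_iff_bounded) (auto simp: top.not_eq_extremum le_less_trans)
  have "ennreal (\<integral>y. (P h y)^2 \<partial>lborel) = (\<integral>\<^sup>+y. ennreal ((P h y)^2) \<partial>lborel)"
    using i by (intro nn_integral_eq_integral[symmetric]) auto
  with le have "ennreal (\<integral>y. (P h y)^2 \<partial>lborel) \<le> ennreal (E2 * Qd D h)" by simp
  then show "(\<integral>y. (P h y)^2 \<partial>lborel) \<le> E2 * Qd D h"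
    using E2 Qd_nn by (simp add: ennreal_le_iff)
qed

lemma P_sq_eq: "(\<lambda>y. (indicator D y * P h y)^2) = (\<lambda>y. (P h y)^2)"
  using P_supp by (auto simp: fun_eq_iff indicator_def)

lemma P_Qd:
  assumes h: "h \<in> Bb D"
  shows "Qd D (P h) \<le> E2 * Qd D h"
proof -
  have "Qd D (P h) = (\<integral>y. (P h y)^2 \<partial>lborel)" unfolding Qd_def P_sq_eq ..
  then show ?thesis using P_Q(2)[OF h] by simp
qed

definition mD where "mD = measure lborel D"

lemma P_nb:
  assumes h: "h \<in> Bb D" and b: "0 \<le> \<beta>"
  shows "integrable lborel (\<lambda>y. (1 + \<beta> * Wf y) * \<bar>P h y\<bar>)"
    "nb \<beta> (P h) \<le> (1 + \<beta> * RD^2) * sqrt mD * sqrt (Qd D (P h))"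
proof -
  note [measurable] = BbD(1)[OF h]
  have m1: "(\<lambda>y. indicator D y :: real) \<in> borel_measurable lborel" by measurable
  have m2: "P h \<in> borel_measurable lborel" by measurable
  have i1: "integrable lborel (\<lambda>y. (indicator D y :: real)^2)"
  proof -
    have "(\<lambda>y. (indicator D y :: real)^2) = indicator D" by (auto simp: fun_eq_iff indicator_def)
    then show ?thesis using Dfin by simp
  qed
  note cs = CS_real[OF m1 m2 i1 P_Q(1)[OF h]]
  have int1: "(\<integral>y. (indicator D y :: real)^2 \<partial>lborel) = mD"
  proof -
    have "(\<lambda>y. (indicator D y :: real)^2) = indicator D" by (auto simp: fun_eq_iff indicator_def)
    then show ?thesis using Dfin by (simp add: mD_def)
  qed
  have pt: "(1 + \<beta> * Wf y) * \<bar>P h y\<bar> \<le> (1 + \<beta> * RD^2) * \<bar>indicator D y * P h y\<bar>" for y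
  proof (cases "y \<in> D")
    case True
    then have "norm y \<le> RD" using DRD by auto
    then have "Wf y \<le> RD^2" unfolding Wf_def by (rule power_mono) simp
    then have "1 + \<beta> * Wf y \<le> 1 + \<beta> * RD^2" using b by (simp add: mult_left_mono)
    then show ?thesis using True by (simp add: mult_right_mono)
  next
    case False
    then show ?thesis by (simp add: P_supp)
  qed
  have i2: "integrable lborel (\<lambda>y. (1 + \<beta> * RD^2) * \<bar>indicator D y * P h y\<bar>)"
    using cs(1) by simp
  show i3: "integrable lborel (\<lambda>y. (1 + \<beta> * Wf y) * \<bar>P h y\<bar>)"
  proof (rule Bochner_Integration.integrable_bound[OF i2])
    show "(\<lambda>y. (1 + \<beta> * Wf y) * \<bar>P h y\<bar>) \<in> borel_measurable lborel" by measurable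
    show "AE y in lborel. norm ((1 + \<beta> * Wf y) * \<bar>P h y\<bar>) \<le> norm ((1 + \<beta> * RD^2) * \<bar>indicator D y * P h y\<bar>)"
    proof (rule AE_I2)
      fix y :: 'a
      have "0 \<le> (1 + \<beta> * Wf y) * \<bar>P h y\<bar>" using b by simp
      then show "norm ((1 + \<beta> * Wf y) * \<bar>P h y\<bar>) \<le> norm ((1 + \<beta> * RD^2) * \<bar>indicator D y * P h y\<bar>)"
        using pt[of y] by simp
    qed
  qed
  have "nb \<beta> (P h) \<le> (\<integral>y. (1 + \<beta> * RD^2) * \<bar>indicator D y * P h y\<bar> \<partial>lborel)"
    unfolding nb_def using i2 i3 pt by (intro integral_mono) auto
  also have "\<dots> = (1 + \<beta> * RD^2) * (\<integral>y. \<bar>indicator D y * P h y\<bar> \<partial>lborel)" by simp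
  also have "\<dots> \<le> (1 + \<beta> * RD^2) * (sqrt mD * sqrt (Qd D (P h)))"
  proof (rule mult_left_mono)
    show "(\<integral>y. \<bar>indicator D y * P h y\<bar> \<partial>lborel) \<le> sqrt mD * sqrt (Qd D (P h))"
      using cs(2) unfolding int1 by (simp add: Qd_def P_sq_eq)
    show "0 \<le> 1 + \<beta> * RD^2" using b by simp
  qed
  finally show "nb \<beta> (P h) \<le> (1 + \<beta> * RD^2) * sqrt mD * sqrt (Qd D (P h))" by (simp add: mult.assoc)
qed

lemma P_Bb:
  assumes h: "h \<in> Bb D"
  shows "P h \<in> Bb D"
proof -
  note [measurable] = BbD(1)[OF h]
  have i: "integrable lborel (\<lambda>y. (1 + 1 * Wf y) * \<bar>P h y\<bar>)" by (rule P_nb(1)[OF h]) simp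
  have 1: "integrable lborel (\<lambda>y. (1 + Wf y) * P h y)"
    by (rule Bochner_Integration.integrable_bound[OF i]) (auto simp: abs_mult)
  have 2: "integrable lborel (\<lambda>y. (indicator D y * P h y)^2)"
    unfolding P_sq_eq by (rule P_Q(1)[OF h])
  show ?thesis using 1 2 by (auto simp: Bb_def)
qed

lemma Ld_Bb:
  assumes h: "h \<in> Bb D"
  shows "Ld h \<in> Bb D"
proof (rule Bb_AE[OF Dm])
  show "(\<lambda>y. Tk \<kappa> h y + P h y) \<in> Bb D" by (rule Bb_add[OF Dm T_Bb[OF h] P_Bb[OF h]])
  show "Ld h \<in> borel_measurable borel" using BbD(1)[OF h] by measurable
  show "AE x in lborel. Ld h x = Tk \<kappa> h x + P h x" by (rule Ld_split_AE[OF h])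
qed

lemma Ld_mass:
  assumes h: "h \<in> Bb D"
  shows "(\<integral>y. Ld h y \<partial>lborel) = (\<integral>x. h x \<partial>lborel)"
proof -
  note [measurable] = BbD(1)[OF h]
  have tr: "transfer (\<lambda>x y. \<kappa> x y + kp x y) h = Ld h"
    unfolding transfer_def Ld_def Tk_def by (auto simp: fun_eq_iff intro!: integral_completion)
  have "(LINT y|lebesgue. Ld h y) = (LINT x|lebesgue. h x)"
    using presd[OF Bb_strong[OF Dm h]] unfolding tr by simp
  then show ?thesis by (simp add: integral_completion)
qed

end


locale pert3 = pert +
  fixes \<alpha> \<beta> :: real
  assumes \<beta>: "0 < \<beta>" and \<alpha>: "0 \<le> \<alpha>" "\<alpha> < 1"
    and contr: "\<And>f. f \<in> Bb D \<Longrightarrow> (\<integral>x. f x \<partial>lborel) = 0 \<Longrightarrow> nb \<beta> (Tk \<kappa> f) \<le> \<alpha> * nb \<beta> f"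
    and small: "sqrt E2 * ((1 + \<beta> * RD^2) * sqrt (measure lborel D)
          + (1 - \<alpha>) / (2 * (sqrt 2 * C0 * sqrt (measure lborel D) + 1)) * sqrt 2)
       \<le> (1 + \<alpha>) / 2 * ((1 - \<alpha>) / (2 * (sqrt 2 * C0 * sqrt (measure lborel D) + 1)))"
begin

definition tt where "tt = (1 - \<alpha>) / (2 * (sqrt 2 * C0 * sqrt mD + 1))"
definition Nn where "Nn h = nb \<beta> h + tt * sqrt (Qd D h)"

lemma mD_nn: "0 \<le> mD" by (simp add: mD_def)

lemma tt_pos: "0 < tt"
  unfolding tt_def using \<alpha> C0 mD_nn by (intro divide_pos_pos) (auto intro!: add_nonneg_pos)

lemma nb_nn: "0 \<le> nb b h" if "0 \<le> b"
  unfolding nb_def using that by (intro integral_nonneg_AE) auto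

lemma Nn_nn: "0 \<le> Nn h"
  unfolding Nn_def using tt_pos \<beta> Qd_nn[of h] by (intro add_nonneg_nonneg nb_nn mult_nonneg_nonneg) auto

lemma le_wb: "0 \<le> b \<Longrightarrow> \<bar>y\<bar> \<le> (1 + b * Wf x) * \<bar>y::real\<bar>"
  using mult_right_mono[of 1 "1 + b * Wf x" "\<bar>y\<bar>"] by simp

lemma L1_le_nb:
  assumes h: "h \<in> Bb D"
  shows "(\<integral>x. \<bar>h x\<bar> \<partial>lborel) \<le> nb \<beta> h"
  unfolding nb_def using Bb_int(2)[OF h] Bb_int_w[OF h, of \<beta>] \<beta>
  by (intro integral_mono) (auto intro!: le_wb)

lemma QdT:
  assumes h: "h \<in> Bb D"
  shows "Qd D (Tk \<kappa> h) \<le> (C0 * (\<integral>x. \<bar>h x\<bar> \<partial>lborel))^2 * mD"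
proof -
  note [measurable] = BbD(1)[OF h]
  define c where "c = C0 * (\<integral>x. \<bar>h x\<bar> \<partial>lborel)"
  have "Qd D (Tk \<kappa> h) \<le> (\<integral>y. c^2 * indicator D y \<partial>lborel)"
    unfolding Qd_def
  proof (rule integral_mono)
    show "integrable lborel (\<lambda>y. (indicator D y * Tk \<kappa> h y)^2)" using BbD(3)[OF T_Bb[OF h]] .
    show "integrable lborel (\<lambda>y. c^2 * indicator D y)" using Dfin by simp
    fix y :: 'a
    have tb: "\<bar>Tk \<kappa> h y\<bar> \<le> c" unfolding c_def by (rule T_bound) (auto simp: Bb_int[OF h])
    have "(Tk \<kappa> h y)^2 \<le> c^2" using power_mono[OF tb abs_ge_zero, of 2] by simp
    then show "(indicator D y * Tk \<kappa> h y)^2 \<le> c^2 * indicator D y" by (auto simp: indicator_def)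
  qed
  also have "\<dots> = c^2 * mD" using Dfin by (simp add: mD_def)
  finally show ?thesis unfolding c_def .
qed

lemma nb_Ld:
  assumes h: "h \<in> Bb D"
  shows "nb \<beta> (Ld h) \<le> nb \<beta> (Tk \<kappa> h) + nb \<beta> (P h)"
proof -
  note [measurable] = BbD(1)[OF h]
  have "nb \<beta> (Ld h) = (\<integral>y. (1 + \<beta> * Wf y) * \<bar>Tk \<kappa> h y + P h y\<bar> \<partial>lborel)"
    unfolding nb_def using Ld_split_AE[OF h] by (intro integral_cong_AE) (auto elim!: eventually_mono)
  also have "\<dots> \<le> (\<integral>y. (1 + \<beta> * Wf y) * \<bar>Tk \<kappa> h y\<bar> + (1 + \<beta> * Wf y) * \<bar>P h y\<bar> \<partial>lborel)"
  proof (rule integral_mono)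
    show "integrable lborel (\<lambda>y. (1 + \<beta> * Wf y) * \<bar>Tk \<kappa> h y + P h y\<bar>)"
      using Bb_int_w[OF Bb_add[OF Dm T_Bb[OF h] P_Bb[OF h]], of \<beta>] \<beta> by simp
    show "integrable lborel (\<lambda>y. (1 + \<beta> * Wf y) * \<bar>Tk \<kappa> h y\<bar> + (1 + \<beta> * Wf y) * \<bar>P h y\<bar>)"
      using Bb_int_w[OF T_Bb[OF h], of \<beta>] P_nb(1)[OF h, of \<beta>] \<beta> by simp
    fix y :: 'a
    have "0 \<le> 1 + \<beta> * Wf y" using \<beta> by simp
    then show "(1 + \<beta> * Wf y) * \<bar>Tk \<kappa> h y + P h y\<bar> \<le> (1 + \<beta> * Wf y) * \<bar>Tk \<kappa> h y\<bar> + (1 + \<beta> * Wf y) * \<bar>P h y\<bar>"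
      by (metis abs_triangle_ineq distrib_left mult_left_mono)
  qed
  also have "\<dots> = nb \<beta> (Tk \<kappa> h) + nb \<beta> (P h)"
    unfolding nb_def using Bb_int_w[OF T_Bb[OF h], of \<beta>] P_nb(1)[OF h, of \<beta>] \<beta> by simp
  finally show ?thesis .
qed

lemma Qd_Ld:
  assumes h: "h \<in> Bb D"
  shows "Qd D (Ld h) \<le> 2 * Qd D (Tk \<kappa> h) + 2 * Qd D (P h)"
proof -
  note [measurable] = BbD(1)[OF h]
  have "Qd D (Ld h) = (\<integral>y. (indicator D y * Tk \<kappa> h y + indicator D y * P h y)^2 \<partial>lborel)"
    unfolding Qd_def using Ld_split_AE[OF h]
    by (intro integral_cong_AE) (auto elim!: eventually_mono simp: distrib_left)
  also have "\<dots> \<le> (\<integral>y. 2 * (indicator D y * Tk \<kappa> h y)^2 + 2 * (indicator D y * P h y)^2 \<partial>lborel)"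
  proof (rule integral_mono)
    show "integrable lborel (\<lambda>y. (indicator D y * Tk \<kappa> h y + indicator D y * P h y)^2)"
      using BbD(3)[OF Bb_add[OF Dm T_Bb[OF h] P_Bb[OF h]]] by (simp add: distrib_left)
    show "integrable lborel (\<lambda>y. 2 * (indicator D y * Tk \<kappa> h y)^2 + 2 * (indicator D y * P h y)^2)"
      using BbD(3)[OF T_Bb[OF h]] BbD(3)[OF P_Bb[OF h]] by simp
    fix y :: 'a show "(indicator D y * Tk \<kappa> h y + indicator D y * P h y)^2
        \<le> 2 * (indicator D y * Tk \<kappa> h y)^2 + 2 * (indicator D y * P h y)^2" by (rule sq_sum_le)
  qed
  also have "\<dots> = 2 * Qd D (Tk \<kappa> h) + 2 * Qd D (P h)"
    unfolding Qd_def using BbD(3)[OF T_Bb[OF h]] BbD(3)[OF P_Bb[OF h]] by simp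
  finally show ?thesis .
qed

lemma Ncontr:
  assumes h: "h \<in> Bb D" and h0: "(\<integral>x. h x \<partial>lborel) = 0"
  shows "Nn (Ld h) \<le> (1 + \<alpha>) / 2 * Nn h"
proof -
  define n where "n = nb \<beta> h"
  define q where "q = sqrt (Qd D h)"
  define sE where "sE = sqrt E2"
  define c3 where "c3 = (1 + \<beta> * RD^2) * sqrt mD"
  define c4 where "c4 = sqrt 2 * C0 * sqrt mD"
  have n0: "0 \<le> n" unfolding n_def using \<beta> by (intro nb_nn) simp
  have q0: "0 \<le> q" unfolding q_def using Qd_nn[of h] by simp
  have sE0: "0 \<le> sE" unfolding sE_def using E2 by simp
  have c30: "0 \<le> c3" unfolding c3_def using \<beta> mD_nn by simp
  have c40: "0 \<le> c4" unfolding c4_def using C0 mD_nn by simp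
  have sm: "sE * (c3 + tt * sqrt 2) \<le> (1 + \<alpha>) / 2 * tt"
    using small unfolding sE_def c3_def tt_def mD_def .
  have ttc4: "tt * c4 \<le> (1 - \<alpha>) / 2"
  proof -
    have "tt * c4 = (1 - \<alpha>) / 2 * (c4 / (c4 + 1))" unfolding tt_def c4_def mD_def
      by (simp add: field_simps)
    also have "\<dots> \<le> (1 - \<alpha>) / 2 * 1"
      using \<alpha> c40 by (intro mult_left_mono) auto
    finally show ?thesis by simp
  qed
  have A: "nb \<beta> (Ld h) \<le> \<alpha> * n + c3 * sE * q"
  proof -
    have "nb \<beta> (P h) \<le> c3 * sqrt (Qd D (P h))" unfolding c3_def using P_nb(2)[OF h, of \<beta>] \<beta> by simp
    also have "\<dots> \<le> c3 * sqrt (E2 * Qd D h)"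
      using P_Qd[OF h] c30 by (intro mult_left_mono) auto
    also have "\<dots> = c3 * sE * q" by (simp add: sE_def q_def real_sqrt_mult)
    finally have "nb \<beta> (P h) \<le> c3 * sE * q" .
    then show ?thesis using nb_Ld[OF h] contr[OF h h0] unfolding n_def by linarith
  qed
  have B: "sqrt (Qd D (Ld h)) \<le> c4 * n + sqrt 2 * sE * q"
  proof -
    have l1: "(\<integral>x. \<bar>h x\<bar> \<partial>lborel) \<le> n" unfolding n_def by (rule L1_le_nb[OF h])
    have l10: "0 \<le> (\<integral>x. \<bar>h x\<bar> \<partial>lborel)" by simp
    have "Qd D (Tk \<kappa> h) \<le> (C0 * n)^2 * mD"
    proof -
      have "(C0 * (\<integral>x. \<bar>h x\<bar> \<partial>lborel))^2 \<le> (C0 * n)^2"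
        using l1 l10 C0 by (intro power_mono mult_left_mono) auto
      then show ?thesis using QdT[OF h] mD_nn by (meson mult_right_mono order_trans)
    qed
    then have "Qd D (Ld h) \<le> 2 * ((C0 * n)^2 * mD) + 2 * (E2 * Qd D h)"
      using Qd_Ld[OF h] P_Qd[OF h] by linarith
    then have "sqrt (Qd D (Ld h)) \<le> sqrt (2 * ((C0 * n)^2 * mD) + 2 * (E2 * Qd D h))"
      by (rule real_sqrt_le_mono)
    also have "\<dots> \<le> sqrt (2 * ((C0 * n)^2 * mD)) + sqrt (2 * (E2 * Qd D h))"
      using mD_nn E2 Qd_nn by (intro sqrt_add_le_add_sqrt) auto
    also have "\<dots> = c4 * n + sqrt 2 * sE * q"
      using n0 C0 unfolding c4_def sE_def q_def by (simp add: real_sqrt_mult)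
    finally show ?thesis .
  qed
  have "Nn (Ld h) \<le> \<alpha> * n + c3 * sE * q + tt * (c4 * n + sqrt 2 * sE * q)"
    unfolding Nn_def using A B tt_pos by (smt (verit) mult_left_mono)
  also have "\<dots> = (\<alpha> + tt * c4) * n + sE * (c3 + tt * sqrt 2) * q" by (simp add: algebra_simps)
  also have "\<dots> \<le> (1 + \<alpha>) / 2 * n + (1 + \<alpha>) / 2 * tt * q"
  proof (rule add_mono)
    show "(\<alpha> + tt * c4) * n \<le> (1 + \<alpha>) / 2 * n" using ttc4 n0 by (intro mult_right_mono) auto
    show "sE * (c3 + tt * sqrt 2) * q \<le> (1 + \<alpha>) / 2 * tt * q" using sm q0 by (intro mult_right_mono) auto
  qed
  also have "\<dots> = (1 + \<alpha>) / 2 * Nn h" unfolding Nn_def n_def q_def by (simp add: algebra_simps)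
  finally show ?thesis .
qed

lemma Ld_int:
  assumes h: "h \<in> Bb D" and Ky: "Ky y < \<infinity>"
  shows "integrable lborel (\<lambda>x. (\<kappa> x y + kp x y) * h x)"
  using T_int[OF BbD(1)[OF h] Bb_int(1)[OF h], of y] P_pt(1)[OF h Ky] by (simp add: distrib_right)

lemma LdB:
  assumes h: "h \<in> Bb D" and Ky: "Ky y < \<infinity>"
  shows "(\<integral>x. \<bar>(\<kappa> x y + kp x y) * h x\<bar> \<partial>lborel) \<le> C0 * (\<integral>x. \<bar>h x\<bar> \<partial>lborel) + sqrt (Kr y) * sqrt (Qd D h)"
proof -
  note [measurable] = BbD(1)[OF h]
  have i1: "integrable lborel (\<lambda>x. \<kappa> x y * h x)" using T_int[OF BbD(1)[OF h] Bb_int(1)[OF h]] .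
  have i2: "integrable lborel (\<lambda>x. kp x y * h x)" using P_pt(1)[OF h Ky] .
  have "(\<integral>x. \<bar>(\<kappa> x y + kp x y) * h x\<bar> \<partial>lborel) \<le> (\<integral>x. \<bar>\<kappa> x y * h x\<bar> + \<bar>kp x y * h x\<bar> \<partial>lborel)"
    using i1 i2 Ld_int[OF h Ky] by (intro integral_mono) (auto simp: distrib_right abs_triangle_ineq)
  also have "\<dots> = (\<integral>x. \<bar>\<kappa> x y * h x\<bar> \<partial>lborel) + (\<integral>x. \<bar>kp x y * h x\<bar> \<partial>lborel)"
    using i1 i2 by simp
  also have "(\<integral>x. \<bar>\<kappa> x y * h x\<bar> \<partial>lborel) \<le> C0 * (\<integral>x. \<bar>h x\<bar> \<partial>lborel)"
  proof -
    have "(\<integral>x. \<bar>\<kappa> x y * h x\<bar> \<partial>lborel) \<le> (\<integral>x. C0 * \<bar>h x\<bar> \<partial>lborel)"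
    proof (rule integral_mono)
      show "integrable lborel (\<lambda>x. \<bar>\<kappa> x y * h x\<bar>)" using i1 by simp
      show "integrable lborel (\<lambda>x. C0 * \<bar>h x\<bar>)" using Bb_int(2)[OF h] by simp
      fix x :: 'a
      have "\<kappa> x y * \<bar>h x\<bar> \<le> C0 * \<bar>h x\<bar>" by (rule mult_right_mono[OF \<kappa>_le]) simp
      then show "\<bar>\<kappa> x y * h x\<bar> \<le> C0 * \<bar>h x\<bar>" using \<kappa>_nn[of x y] by (simp add: abs_mult)
    qed
    then show ?thesis by simp
  qed
  finally show ?thesis using P_pt(2)[OF h Ky] by linarith
qed

lemma Ld_abs:
  assumes h: "h \<in> Bb D" and Ky: "Ky y < \<infinity>"
  shows "\<bar>Ld h y\<bar> \<le> C0 * (\<integral>x. \<bar>h x\<bar> \<partial>lborel) + sqrt (Kr y) * sqrt (Qd D h)"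
proof -
  have "\<bar>Ld h y\<bar> \<le> (\<integral>x. \<bar>(\<kappa> x y + kp x y) * h x\<bar> \<partial>lborel)"
    unfolding Ld_def Tk_def by (rule integral_abs_bound)
  then show ?thesis using LdB[OF h Ky] by linarith
qed

lemma Ld_diff:
  assumes h: "h \<in> Bb D" and g: "g \<in> Bb D" and Ky: "Ky y < \<infinity>"
  shows "Ld (\<lambda>x. h x - g x) y = Ld h y - Ld g y"
  unfolding Ld_def Tk_def using Ld_int[OF h Ky] Ld_int[OF g Ky]
  by (simp add: right_diff_distrib)

lemma Nn_cong:
  assumes h: "h \<in> Bb D" and g[measurable]: "g \<in> borel_measurable borel" and ae: "AE x in lborel. g x = h x"
  shows "Nn g = Nn h"
proof -
  note [measurable] = BbD(1)[OF h]
  have "nb \<beta> g = nb \<beta> h" unfolding nb_def using ae by (intro integral_cong_AE) (auto elim!: eventually_mono)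
  moreover have "Qd D g = Qd D h" unfolding Qd_def using ae BbD(1)[OF h]
    by (intro integral_cong_AE) (auto elim!: eventually_mono)
  ultimately show ?thesis by (simp add: Nn_def)
qed

definition B1 where "B1 = measure lborel (cball (0::'a) 1)"
definition f0 where "f0 = (\<lambda>x. indicator (cball (0::'a) 1) x / B1)"
definition fs where "fs n = (Ld ^^ n) f0"
definition dd where "dd n = (\<lambda>x. fs (Suc n) x - fs n x)"
definition \<rho> where "\<rho> = (1 + \<alpha>) / 2"
definition N0 where "N0 = Nn (dd 0)"

lemma B1_pos: "0 < B1" unfolding B1_def by simp

lemma f0_Bb: "f0 \<in> Bb D"
proof -
  have "(\<lambda>x. indicator (cball (0::'a) 1) x :: real) \<in> Bb D"
    by (rule ind_Bb[OF Dm]) auto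
  from Bb_scale[OF Dm this, of "1 / B1"] show ?thesis by (simp add: f0_def)
qed

lemma f0_int: "(\<integral>x. f0 x \<partial>lborel) = 1"
  unfolding f0_def using B1_pos emeasure_lborel_cball_finite[of "0::'a" 1] by (simp add: B1_def)

lemma fs_Bb: "fs n \<in> Bb D"
  by (induction n) (auto simp: fs_def f0_Bb intro: Ld_Bb)

lemma fs_Suc: "fs (Suc n) = Ld (fs n)" by (simp add: fs_def)

lemma fs_int: "(\<integral>x. fs n x \<partial>lborel) = 1"
proof (induction n)
  case 0 then show ?case by (simp add: fs_def f0_int)
next
  case (Suc n) then show ?case using Ld_mass[OF fs_Bb[of n]] by (simp add: fs_Suc)
qed

lemma dd_Bb: "dd n \<in> Bb D" unfolding dd_def by (rule Bb_diff[OF Dm fs_Bb fs_Bb])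

lemma dd_meas[measurable]: "dd n \<in> borel_measurable borel" using BbD(1)[OF dd_Bb] .

lemma dd_int0: "(\<integral>x. dd n x \<partial>lborel) = 0"
  unfolding dd_def using Bb_int(1)[OF fs_Bb[of n]] Bb_int(1)[OF fs_Bb[of "Suc n"]] fs_int by simp

lemma dd_rec_AE: "AE y in lborel. dd (Suc n) y = Ld (dd n) y"
  using Ky_fin
proof eventually_elim
  case (elim y)
  show ?case unfolding dd_def fs_Suc[of "Suc n"] fs_Suc[of n]
    using Ld_diff[OF fs_Bb[of "Suc n"] fs_Bb[of n] elim] by (simp add: fs_Suc)
qed

lemma rho: "0 < \<rho>" "\<rho> < 1" using \<alpha> by (auto simp: \<rho>_def)

lemma dd_Nn: "Nn (dd n) \<le> \<rho>^n * N0"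
proof (induction n)
  case 0 then show ?case by (simp add: N0_def)
next
  case (Suc n)
  have "Nn (dd (Suc n)) = Nn (Ld (dd n))"
    by (rule Nn_cong[OF Ld_Bb[OF dd_Bb] dd_meas dd_rec_AE])
  also have "\<dots> \<le> \<rho> * Nn (dd n)" unfolding \<rho>_def by (rule Ncontr[OF dd_Bb dd_int0])
  also have "\<dots> \<le> \<rho> * (\<rho>^n * N0)" using Suc rho by (intro mult_left_mono) auto
  finally show ?case by simp
qed

lemma N0_nn: "0 \<le> N0" unfolding N0_def by (rule Nn_nn)

lemma dd_nb: "nb \<beta> (dd n) \<le> \<rho>^n * N0"
proof -
  have "nb \<beta> (dd n) \<le> Nn (dd n)" unfolding Nn_def using tt_pos Qd_nn[of "dd n"] by simp
  then show ?thesis using dd_Nn[of n] by linarith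
qed

lemma dd_L1: "(\<integral>x. \<bar>dd n x\<bar> \<partial>lborel) \<le> \<rho>^n * N0"
  using L1_le_nb[OF dd_Bb, of n] dd_nb[of n] by linarith

lemma dd_Q: "sqrt (Qd D (dd n)) \<le> \<rho>^n * N0 / tt"
proof -
  have "tt * sqrt (Qd D (dd n)) \<le> Nn (dd n)" unfolding Nn_def using \<beta> nb_nn[of \<beta> "dd n"] by simp
  then have "tt * sqrt (Qd D (dd n)) \<le> \<rho>^n * N0" using dd_Nn[of n] by linarith
  then show ?thesis using tt_pos by (simp add: field_simps)
qed

definition cy where "cy y = (C0 + sqrt (Kr y) / tt) * N0"

lemma dd_pt: "AE y in lborel. Ky y < \<infinity> \<and> (\<forall>n. dd (Suc n) y = Ld (dd n) y \<and> \<bar>dd (Suc n) y\<bar> \<le> cy y * \<rho>^n)"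
proof -
  have "AE y in lborel. \<forall>n. dd (Suc n) y = Ld (dd n) y"
    unfolding AE_all_countable using dd_rec_AE by blast
  then show ?thesis using Ky_fin
  proof eventually_elim
    case (elim y)
    have "\<bar>dd (Suc n) y\<bar> \<le> cy y * \<rho>^n" for n
    proof -
      have "\<bar>dd (Suc n) y\<bar> = \<bar>Ld (dd n) y\<bar>" using elim by simp
      also have "\<dots> \<le> C0 * (\<integral>x. \<bar>dd n x\<bar> \<partial>lborel) + sqrt (Kr y) * sqrt (Qd D (dd n))"
        by (rule Ld_abs[OF dd_Bb]) (use elim in simp)
      also have "\<dots> \<le> C0 * (\<rho>^n * N0) + sqrt (Kr y) * (\<rho>^n * N0 / tt)"
        using C0 dd_L1[of n] dd_Q[of n] Kr_nn[of y] by (intro add_mono mult_left_mono) auto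
      also have "\<dots> = cy y * \<rho>^n" unfolding cy_def using tt_pos by (simp add: field_simps)
      finally show ?thesis .
    qed
    then show ?case using elim by auto
  qed
qed

lemma sq4: "(u1 + u2 + u3 + u4)^2 \<le> 4 * (u1^2 + u2^2 + u3^2 + (u4::real)^2)"
proof -
  have "(u1 + u2 + u3 + u4)^2 = ((u1 + u2) + (u3 + u4))^2" by (simp add: add.assoc)
  also have "\<dots> \<le> 2 * (u1 + u2)^2 + 2 * (u3 + u4)^2" by (rule sq_sum_le)
  also have "\<dots> \<le> 2 * (2 * u1^2 + 2 * u2^2) + 2 * (2 * u3^2 + 2 * u4^2)"
    using sq_sum_le[of u1 u2] sq_sum_le[of u3 u4] by (intro add_mono mult_left_mono) auto
  finally show ?thesis by simp
qed

lemma Kr_meas[measurable]: "Kr \<in> borel_measurable borel"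
  unfolding Kr_def[abs_def] by measurable

lemma Kr_integrable: "integrable lborel Kr"
proof -
  have "(\<integral>\<^sup>+y. ennreal (norm (Kr y)) \<partial>lborel) = (\<integral>\<^sup>+y. Ky y \<partial>lborel)"
    using Ky_fin by (intro nn_integral_cong_AE) (auto elim!: eventually_mono simp: Kr_eq(3) Kr_nn)
  also have "\<dots> < \<infinity>" by (simp add: Ky_int)
  finally show ?thesis by (subst integrable_iff_bounded) auto
qed

definition FF where "FF x = f0 x + (\<Sum>n. dd n x)"

lemma f0_meas[measurable]: "f0 \<in> borel_measurable borel" using BbD(1)[OF f0_Bb] .

lemma FF_meas[measurable]: "FF \<in> borel_measurable borel"
  unfolding FF_def[abs_def] by measurable

lemma geo: "summable (\<lambda>n. c * \<rho>^n)" using rho by (intro summable_mult summable_geometric) auto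

lemma dd_summ_AE: "AE y in lborel. summable (\<lambda>n. \<bar>dd n y\<bar>)"
  using dd_pt
proof eventually_elim
  case (elim y)
  have bb: "\<And>n. \<bar>dd (Suc n) y\<bar> \<le> cy y * \<rho>^n" using elim by blast
  have "summable (\<lambda>n. \<bar>dd (Suc n) y\<bar>)"
    by (rule summable_comparison_test[OF _ geo[of "cy y"]]) (use bb in auto)
  then show ?case by (subst summable_Suc_iff[symmetric]) simp
qed

lemma dd_L1_summ: "summable (\<lambda>n. (\<integral>x. norm (dd n x) \<partial>lborel))"
  by (rule summable_comparison_test[OF _ geo[of N0]]) (use dd_L1 in \<open>auto simp: mult.commute\<close>)

lemma wdd:
  shows "integrable lborel (\<lambda>x. (1 + Wf x) * dd n x)"
    "(\<integral>x. norm ((1 + Wf x) * dd n x) \<partial>lborel) \<le> (1 + 1/\<beta>) * (\<rho>^n * N0)"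
proof -
  show "integrable lborel (\<lambda>x. (1 + Wf x) * dd n x)" by (rule BbD(2)[OF dd_Bb])
  have "(\<integral>x. norm ((1 + Wf x) * dd n x) \<partial>lborel) \<le> (\<integral>x. (1 + 1/\<beta>) * ((1 + \<beta> * Wf x) * \<bar>dd n x\<bar>) \<partial>lborel)"
  proof (rule integral_mono)
    show "integrable lborel (\<lambda>x. norm ((1 + Wf x) * dd n x))" using BbD(2)[OF dd_Bb] by simp
    show "integrable lborel (\<lambda>x. (1 + 1/\<beta>) * ((1 + \<beta> * Wf x) * \<bar>dd n x\<bar>))"
      using Bb_int_w[OF dd_Bb, of \<beta>] \<beta> by simp
    fix x :: 'a
    have "1 + Wf x \<le> (1 + 1/\<beta>) * (1 + \<beta> * Wf x)" using \<beta> Wf_nonneg[of x] by (simp add: field_simps)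
    then have "(1 + Wf x) * \<bar>dd n x\<bar> \<le> (1 + 1/\<beta>) * (1 + \<beta> * Wf x) * \<bar>dd n x\<bar>"
      by (rule mult_right_mono) simp
    then show "norm ((1 + Wf x) * dd n x) \<le> (1 + 1/\<beta>) * ((1 + \<beta> * Wf x) * \<bar>dd n x\<bar>)"
      using Wf_nonneg[of x] by (simp add: abs_mult mult.assoc)
  qed
  also have "\<dots> = (1 + 1/\<beta>) * nb \<beta> (dd n)" unfolding nb_def by simp
  also have "\<dots> \<le> (1 + 1/\<beta>) * (\<rho>^n * N0)" using dd_nb[of n] \<beta> by (intro mult_left_mono) auto
  finally show "(\<integral>x. norm ((1 + Wf x) * dd n x) \<partial>lborel) \<le> (1 + 1/\<beta>) * (\<rho>^n * N0)" .
qed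

lemma FF_Bb: "FF \<in> Bb D"
proof -
  have s1: "summable (\<lambda>n. (\<integral>x. norm ((1 + Wf x) * dd n x) \<partial>lborel))"
    by (rule summable_comparison_test[OF _ geo[of "(1 + 1/\<beta>) * N0"]]) (use wdd(2) in \<open>auto simp: ac_simps\<close>)
  have s2: "AE x in lborel. summable (\<lambda>n. norm ((1 + Wf x) * dd n x))"
    using dd_summ_AE by eventually_elim (auto simp: abs_mult intro: summable_mult)
  have i1: "integrable lborel (\<lambda>x. \<Sum>n. (1 + Wf x) * dd n x)"
    by (rule integrable_suminf[OF wdd(1) s2 s1])
  have 1: "integrable lborel (\<lambda>x. (1 + Wf x) * FF x)"
  proof (rule integrable_cong_AE_imp)
    show "integrable lborel (\<lambda>x. (1 + Wf x) * f0 x + (\<Sum>n. (1 + Wf x) * dd n x))"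
      using BbD(2)[OF f0_Bb] i1 by simp
    show "(\<lambda>x. (1 + Wf x) * FF x) \<in> borel_measurable lborel" by measurable
    show "AE x in lborel. (1 + Wf x) * f0 x + (\<Sum>n. (1 + Wf x) * dd n x) = (1 + Wf x) * FF x"
      using dd_summ_AE
    proof eventually_elim
      case (elim x)
      then have "summable (\<lambda>n. dd n x)" by (rule summable_rabs_cancel)
      then show ?case by (simp add: FF_def distrib_left suminf_mult)
    qed
  qed
  define A0 where "A0 = C0 * N0 / (1 - \<rho>)"
  define A1 where "A1 = N0 / (tt * (1 - \<rho>))"
  have bnd: "AE y in lborel. \<bar>FF y\<bar> \<le> \<bar>f0 y\<bar> + \<bar>dd 0 y\<bar> + (A0 + A1 * sqrt (Kr y))"
    using dd_pt
  proof eventually_elim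
    case (elim y)
    have bb: "\<And>n. \<bar>dd (Suc n) y\<bar> \<le> cy y * \<rho>^n" using elim by blast
    have sS: "summable (\<lambda>n. \<bar>dd (Suc n) y\<bar>)"
      by (rule summable_comparison_test[OF _ geo[of "cy y"]]) (use bb in auto)
    then have sd: "summable (\<lambda>n. dd n y)"
      by (subst summable_Suc_iff[symmetric]) (rule summable_rabs_cancel)
    have "FF y = f0 y + dd 0 y + (\<Sum>n. dd (Suc n) y)"
      unfolding FF_def using suminf_split_head[OF sd] by simp
    moreover have "\<bar>\<Sum>n. dd (Suc n) y\<bar> \<le> (\<Sum>n. cy y * \<rho>^n)"
    proof -
      have "\<bar>\<Sum>n. dd (Suc n) y\<bar> \<le> (\<Sum>n. \<bar>dd (Suc n) y\<bar>)" by (rule summable_rabs[OF sS])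
      also have "\<dots> \<le> (\<Sum>n. cy y * \<rho>^n)" using bb by (intro suminf_le sS geo) auto
      finally show ?thesis .
    qed
    moreover have "(\<Sum>n. cy y * \<rho>^n) = A0 + A1 * sqrt (Kr y)"
    proof -
      have sg: "summable (\<lambda>n. \<rho>^n)" using rho by (intro summable_geometric) auto
      have "(\<Sum>n. cy y * \<rho>^n) = cy y * (\<Sum>n. \<rho>^n)" by (rule suminf_mult[OF sg])
      also have "(\<Sum>n. \<rho>^n) = 1 / (1 - \<rho>)" using rho by (intro suminf_geometric) auto
      finally have "(\<Sum>n. cy y * \<rho>^n) = cy y / (1 - \<rho>)" by simp
      also have "\<dots> = A0 + A1 * sqrt (Kr y)"
      proof -
        define r where "r = 1 - \<rho>"
        have r: "0 < r" using rho by (simp add: r_def)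
        show ?thesis unfolding A0_def A1_def cy_def r_def[symmetric]
          using r tt_pos by (simp add: field_simps)
      qed
      finally show ?thesis .
    qed
    ultimately show ?case by linarith
  qed
  have A0: "0 \<le> A0" "0 \<le> A1" using C0 N0_nn rho tt_pos by (auto simp: A0_def A1_def)
  have i2: "integrable lborel (\<lambda>y. 4 * ((indicator D y * f0 y)^2 + (indicator D y * dd 0 y)^2
      + A0^2 * indicator D y + A1^2 * Kr y))"
    using BbD(3)[OF f0_Bb] BbD(3)[OF dd_Bb[of 0]] Dfin Kr_integrable by simp
  have 2: "integrable lborel (\<lambda>y. (indicator D y * FF y)^2)"
  proof (rule Bochner_Integration.integrable_bound[OF i2])
    show "(\<lambda>y. (indicator D y * FF y)^2) \<in> borel_measurable lborel" by measurable
    show "AE y in lborel. norm ((indicator D y * FF y)^2) \<le> norm (4 * ((indicator D y * f0 y)^2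
      + (indicator D y * dd 0 y)^2 + A0^2 * indicator D y + A1^2 * Kr y))"
      using bnd
    proof eventually_elim
      case (elim y)
      let ?G = "indicator D y * \<bar>f0 y\<bar> + indicator D y * \<bar>dd 0 y\<bar> + indicator D y * A0 + indicator D y * (A1 * sqrt (Kr y))"
      have ge: "\<bar>indicator D y * FF y\<bar> \<le> ?G"
        using elim by (auto simp: indicator_def)
      have "(indicator D y * FF y)^2 \<le> ?G^2"
        using power_mono[OF ge abs_ge_zero, of 2] by simp
      also have "\<dots> \<le> 4 * ((indicator D y * \<bar>f0 y\<bar>)^2 + (indicator D y * \<bar>dd 0 y\<bar>)^2
          + (indicator D y * A0)^2 + (indicator D y * (A1 * sqrt (Kr y)))^2)" by (rule sq4)
      also have "\<dots> \<le> 4 * ((indicator D y * f0 y)^2 + (indicator D y * dd 0 y)^2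
          + A0^2 * indicator D y + A1^2 * Kr y)"
        using Kr_nn[of y] by (auto simp: indicator_def power_mult_distrib)
      finally show ?case using Kr_nn[of y] by simp
    qed
  qed
  show ?thesis using 1 2 by (auto simp: Bb_def)
qed

lemma FF_int: "(\<integral>x. FF x \<partial>lborel) = 1"
proof -
  have idd: "\<And>n. integrable lborel (dd n)" using Bb_int(1)[OF dd_Bb] .
  have s2: "AE x in lborel. summable (\<lambda>n. norm (dd n x))" using dd_summ_AE by simp
  have "(\<integral>x. FF x \<partial>lborel) = (\<integral>x. f0 x \<partial>lborel) + (\<integral>x. (\<Sum>n. dd n x) \<partial>lborel)"
    unfolding FF_def using Bb_int(1)[OF f0_Bb] integrable_suminf[OF idd s2 dd_L1_summ]
    by (rule Bochner_Integration.integral_add)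
  also have "(\<integral>x. (\<Sum>n. dd n x) \<partial>lborel) = (\<Sum>n. (\<integral>x. dd n x \<partial>lborel))"
    by (rule integral_suminf[OF idd s2 dd_L1_summ])
  finally show ?thesis by (simp add: f0_int dd_int0)
qed

lemma FF_fix: "AE y in lborel. Ld FF y = FF y"
  using dd_pt dd_summ_AE
proof eventually_elim
  case (elim y)
  have Ky: "Ky y < \<infinity>" using elim by blast
  have bb: "\<And>n. \<bar>dd (Suc n) y\<bar> \<le> cy y * \<rho>^n" using elim by blast
  have rec: "\<And>n. Ld (dd n) y = dd (Suc n) y" using elim by auto
  have sy: "summable (\<lambda>n. dd n y)" using elim by (auto intro: summable_rabs_cancel)
  define k where "k = (\<lambda>x. \<kappa> x y + kp x y)"
  have kx: "\<And>x. \<kappa> x y + kp x y = k x" by (simp add: k_def)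
  have ik: "\<And>n. integrable lborel (\<lambda>x. k x * dd n x)" unfolding k_def using Ld_int[OF dd_Bb Ky] .
  have s2: "AE x in lborel. summable (\<lambda>n. norm (k x * dd n x))"
    using dd_summ_AE by eventually_elim (auto simp: abs_mult intro: summable_mult)
  have s3: "summable (\<lambda>n. (\<integral>x. norm (k x * dd n x) \<partial>lborel))"
  proof (rule summable_comparison_test[OF _ geo[of "cy y"]])
    show "\<exists>N. \<forall>n\<ge>N. norm (\<integral>x. norm (k x * dd n x) \<partial>lborel) \<le> cy y * \<rho>^n"
    proof (intro exI allI impI)
      fix n :: nat
      have "(\<integral>x. \<bar>k x * dd n x\<bar> \<partial>lborel) \<le> C0 * (\<integral>x. \<bar>dd n x\<bar> \<partial>lborel) + sqrt (Kr y) * sqrt (Qd D (dd n))"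
        unfolding k_def by (rule LdB[OF dd_Bb Ky])
      also have "\<dots> \<le> C0 * (\<rho>^n * N0) + sqrt (Kr y) * (\<rho>^n * N0 / tt)"
        using C0 dd_L1[of n] dd_Q[of n] Kr_nn[of y] by (intro add_mono mult_left_mono) auto
      also have "\<dots> = cy y * \<rho>^n" unfolding cy_def using tt_pos by (simp add: field_simps)
      finally show "norm (\<integral>x. norm (k x * dd n x) \<partial>lborel) \<le> cy y * \<rho>^n" by simp
    qed
  qed
  have "Ld FF y = (\<integral>x. k x * f0 x + (\<Sum>n. k x * dd n x) \<partial>lborel)"
    unfolding Ld_def Tk_def kx
  proof (rule integral_cong_AE)
    show "(\<lambda>x. k x * FF x) \<in> borel_measurable lborel" unfolding k_def by measurable
    show "(\<lambda>x. k x * f0 x + (\<Sum>n. k x * dd n x)) \<in> borel_measurable lborel" unfolding k_def by measurable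
    show "AE x in lborel. k x * FF x = k x * f0 x + (\<Sum>n. k x * dd n x)"
      using dd_summ_AE
    proof eventually_elim
      case (elim x)
      then have "summable (\<lambda>n. dd n x)" by (rule summable_rabs_cancel)
      then show ?case by (simp add: FF_def distrib_left suminf_mult)
    qed
  qed
  also have "\<dots> = (\<integral>x. k x * f0 x \<partial>lborel) + (\<integral>x. (\<Sum>n. k x * dd n x) \<partial>lborel)"
    using Ld_int[OF f0_Bb Ky] integrable_suminf[OF ik s2 s3] unfolding k_def
    by (rule Bochner_Integration.integral_add)
  also have "(\<integral>x. (\<Sum>n. k x * dd n x) \<partial>lborel) = (\<Sum>n. (\<integral>x. k x * dd n x \<partial>lborel))"
    by (rule integral_suminf[OF ik s2 s3])
  also have "(\<Sum>n. (\<integral>x. k x * dd n x \<partial>lborel)) = (\<Sum>n. dd (Suc n) y)"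
    using rec unfolding Ld_def Tk_def k_def by simp
  also have "(\<integral>x. k x * f0 x \<partial>lborel) = f0 y + dd 0 y"
    unfolding k_def using fs_Suc[of 0] by (simp add: dd_def Ld_def Tk_def fs_def)
  also have "f0 y + dd 0 y + (\<Sum>n. dd (Suc n) y) = FF y"
    unfolding FF_def using suminf_split_head[OF sy] by simp
  finally show ?case .
qed

lemma FF_unique:
  assumes g: "g \<in> Bb D" and g1: "(\<integral>x. g x \<partial>lborel) = 1" and gf: "AE y in lborel. Ld g y = g y"
  shows "AE x in lborel. g x = FF x"
proof -
  define h where "h = (\<lambda>x. g x - FF x)"
  have hB: "h \<in> Bb D" unfolding h_def by (rule Bb_diff[OF Dm g FF_Bb])
  note [measurable] = BbD(1)[OF hB] BbD(1)[OF g]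
  have h0: "(\<integral>x. h x \<partial>lborel) = 0"
    unfolding h_def using Bb_int(1)[OF g] Bb_int(1)[OF FF_Bb] g1 FF_int by simp
  have "AE y in lborel. Ld h y = h y"
    using gf FF_fix Ky_fin
  proof eventually_elim
    case (elim y)
    then show ?case unfolding h_def using Ld_diff[OF g FF_Bb] by simp
  qed
  then have "Nn (Ld h) = Nn h" by (intro Nn_cong[OF hB]) (auto intro: Ld_meas)
  with Ncontr[OF hB h0] have "Nn h \<le> \<rho> * Nn h" by (simp add: \<rho>_def)
  then have "Nn h \<le> 0" using rho Nn_nn[of h] by (smt (verit) mult_le_cancel_right1)
  then have "nb \<beta> h = 0"
    using Nn_nn[of h] nb_nn[of \<beta> h] \<beta> tt_pos Qd_nn[of h] unfolding Nn_def
    by (smt (verit) mult_nonneg_nonneg real_sqrt_ge_zero)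
  then have "AE x in lborel. (1 + \<beta> * Wf x) * \<bar>h x\<bar> = 0"
    unfolding nb_def using Bb_int_w[OF hB, of \<beta>] \<beta>
    by (subst (asm) integral_nonneg_eq_0_iff_AE) auto
  then show ?thesis
  proof eventually_elim
    case (elim x)
    have "0 < 1 + \<beta> * Wf x" using \<beta> by (simp add: add_pos_nonneg)
    with elim show ?case by (simp add: h_def)
  qed
qed

end


lemma flow_bound:
  fixes b :: "'a::euclidean_space \<Rightarrow> 'a" and \<theta> :: "real \<Rightarrow> 'a \<Rightarrow> 'a"
  assumes c2: "c2 > 0" and diss: "\<And>x. inner (b x) x \<le> c1 - c2 * (norm x)^2"
    and flow0: "\<And>x. \<theta> 0 x = x"
    and flow: "\<And>x t. t \<ge> 0 \<Longrightarrow>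
                 ((\<lambda>s. \<theta> s x) has_vector_derivative b (\<theta> t x)) (at t within {0..})"
  shows "(norm (\<theta> 1 x))^2 \<le> exp (-2*c2) * (norm x)^2 + \<bar>c1\<bar> / c2"
proof -
  define g where "g = (\<lambda>s. \<theta> s x)"
  define phi where "phi = (\<lambda>u. exp (2*c2*u) * (g u \<bullet> g u - c1/c2))"
  define E where "E = (\<lambda>t. 2*c2*exp(2*c2*t)*(g t \<bullet> g t - c1/c2) + exp(2*c2*t)*(2*(b (g t) \<bullet> g t)))"
  have hd: "(g has_derivative (\<lambda>h. h *\<^sub>R b (g t))) (at t within {0..1})" if "0 \<le> t" for t
  proof -
    have "(g has_vector_derivative b (g t)) (at t within {0..1})"
      using has_vector_derivative_within_subset[OF flow[OF that, of x]] unfolding g_def by auto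
    then show ?thesis by (simp add: has_vector_derivative_def)
  qed
  have dphi: "(phi has_derivative (\<lambda>h. h * E t)) (at t within {0..1})" if "0 \<le> t" "t \<le> 1" for t
    unfolding phi_def E_def
    apply (rule has_derivative_eq_rhs)
     apply (rule derivative_eq_intros hd that refl | simp)+
    apply (auto simp: fun_eq_iff algebra_simps inner_commute)
    done
  obtain \<xi> where "\<xi> \<in> {0<..<1}" and xi: "phi 1 - phi 0 = 1 * E \<xi>"
    using mvt_simple[of 0 1 phi "\<lambda>t h. h * E t"] dphi by auto
  have "E \<xi> \<le> 0"
  proof -
    have "b (g \<xi>) \<bullet> g \<xi> \<le> c1 - c2 * (g \<xi> \<bullet> g \<xi>)"
      using diss[of "g \<xi>"] by (simp add: power2_norm_eq_inner)
    moreover have "2*c2*(g \<xi> \<bullet> g \<xi> - c1/c2) = 2*c2*(g \<xi> \<bullet> g \<xi>) - 2*c1"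
      using c2 by (simp add: field_simps)
    ultimately have "2*c2*(g \<xi> \<bullet> g \<xi> - c1/c2) + 2*(b (g \<xi>) \<bullet> g \<xi>) \<le> 0"
      by linarith
    then have "exp(2*c2*\<xi>) * (2*c2*(g \<xi> \<bullet> g \<xi> - c1/c2) + 2*(b (g \<xi>) \<bullet> g \<xi>)) \<le> 0"
      by (simp add: mult_nonneg_nonpos)
    moreover have "E \<xi> = exp(2*c2*\<xi>) * (2*c2*(g \<xi> \<bullet> g \<xi> - c1/c2) + 2*(b (g \<xi>) \<bullet> g \<xi>))"
      unfolding E_def by (simp add: algebra_simps)
    ultimately show ?thesis by simp
  qed
  then have "phi 1 \<le> phi 0" using xi by simp
  then have "exp (2*c2) * ((norm (\<theta> 1 x))^2 - c1/c2) \<le> (norm x)^2 - c1/c2"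
    by (simp add: phi_def g_def flow0 power2_norm_eq_inner)
  then have H: "exp (-2*c2) * (exp (2*c2) * ((norm (\<theta> 1 x))^2 - c1/c2)) \<le> exp (-2*c2) * ((norm x)^2 - c1/c2)"
    by (rule mult_left_mono) simp
  have e: "exp(-2*c2) * exp(2*c2) = 1" by (simp flip: exp_add)
  have Xeq: "(norm (\<theta> 1 x))^2 - c1/c2 = exp (-2*c2) * (exp (2*c2) * ((norm (\<theta> 1 x))^2 - c1/c2))"
    using e by (metis mult.assoc mult_1)
  have "(norm (\<theta> 1 x))^2 - c1/c2 \<le> exp (-2*c2) * ((norm x)^2 - c1/c2)"
    by (rule ord_eq_le_trans[OF Xeq H])
  also have "\<dots> = exp (-2*c2) * (norm x)^2 - exp (-2*c2) * (c1/c2)" by (simp add: algebra_simps)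
  finally have A: "(norm (\<theta> 1 x))^2 \<le> exp (-2*c2) * (norm x)^2 + (1 - exp (-2*c2)) * (c1/c2)"
    by (simp add: algebra_simps)
  have "(1 - exp (-2*c2)) * (c1/c2) \<le> \<bar>c1\<bar> / c2"
  proof -
    have "0 \<le> 1 - exp (-2*c2)" "1 - exp (-2*c2) \<le> 1" using c2 by auto
    moreover have "c1/c2 \<le> \<bar>c1\<bar>/c2" using c2 by (simp add: divide_right_mono)
    moreover have "0 \<le> \<bar>c1\<bar>/c2" using c2 by simp
    ultimately have "(1 - exp (-2*c2)) * (c1/c2) \<le> (1 - exp (-2*c2)) * (\<bar>c1\<bar>/c2)"
      by (intro mult_left_mono) auto
    also have "\<dots> \<le> \<bar>c1\<bar>/c2"
      using \<open>0 \<le> \<bar>c1\<bar>/c2\<close> \<open>0 \<le> 1 - exp (-2*c2)\<close> \<open>1 - exp (-2*c2) \<le> 1\<close>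
      by (rule mult_left_le_one_le)
    finally show ?thesis .
  qed
  with A show ?thesis by simp
qed


context pert3
begin

lemma K_meas[measurable]: "(\<lambda>(x,y). \<kappa> x y + kp x y) \<in> borel_measurable (lborel \<Otimes>\<^sub>M lborel)"
  by measurable

lemma transfer_Ld:
  assumes [measurable]: "f \<in> borel_measurable borel"
  shows "transfer (\<lambda>x y. \<kappa> x y + kp x y) f = Ld f"
  unfolding transfer_def Ld_def Tk_def by (auto simp: fun_eq_iff intro!: integral_completion)

lemma exist_strong:
  "FF \<in> strong_space D \<and> (LINT x|lebesgue. FF x) = 1 \<and>
     (AE y in lebesgue. transfer (\<lambda>x y. \<kappa> x y + kp x y) FF y = FF y)"
proof (intro conjI)
  show "FF \<in> strong_space D" by (rule Bb_strong[OF Dm FF_Bb])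
  show "(LINT x|lebesgue. FF x) = 1" using FF_int by (simp add: integral_completion)
  show "AE y in lebesgue. transfer (\<lambda>x y. \<kappa> x y + kp x y) FF y = FF y"
    unfolding transfer_Ld[OF FF_meas] using FF_fix by (rule AE_completion)
qed

lemma uniq_strong:
  assumes g: "g \<in> strong_space D" and g1: "(LINT x|lebesgue. g x) = 1"
    and gf: "AE y in lebesgue. transfer (\<lambda>x y. \<kappa> x y + kp x y) g y = g y"
  shows "AE x in lebesgue. g x = FF x"
proof -
  have gm[measurable]: "g \<in> borel_measurable lebesgue"
    and gi1: "integrable lebesgue (\<lambda>x. rho 2 x * g x)"
    and gi2: "integrable lebesgue (\<lambda>x. (indicator D x * g x)^2)"
    using g by (auto simp: strong_space_def L1w_def)
  obtain g' where g'm: "g' \<in> borel_measurable lborel" and ae: "AE x in lborel. g x = g' x"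
    using completion_ex_borel_measurable_real[OF gm] by blast
  have g'b[measurable]: "g' \<in> borel_measurable borel" using g'm by simp
  have aeL: "AE x in lebesgue. g x = g' x" using ae by (rule AE_completion)
  have r: "rho 2 x = 1 + Wf x" for x :: 'a by (simp add: rho_def Wf_def)
  have i1: "integrable lborel (\<lambda>x. (1 + Wf x) * g' x)"
  proof -
    have "integrable lebesgue (\<lambda>x. (1 + Wf x) * g' x)"
    proof (rule integrable_cong_AE_imp[OF gi1])
      show "(\<lambda>x. (1 + Wf x) * g' x) \<in> borel_measurable lebesgue"
        by (rule measurable_completion) measurable
      show "AE x in lebesgue. rho 2 x * g x = (1 + Wf x) * g' x" using aeL by eventually_elim (simp add: r)
    qed
    then show ?thesis by (subst (asm) integrable_completion) measurable
  qed
  have i2: "integrable lborel (\<lambda>x. (indicator D x * g' x)^2)"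
  proof -
    have "integrable lebesgue (\<lambda>x. (indicator D x * g' x)^2)"
    proof (rule integrable_cong_AE_imp[OF gi2])
      show "(\<lambda>x. (indicator D x * g' x)^2) \<in> borel_measurable lebesgue"
        by (rule measurable_completion) measurable
      show "AE x in lebesgue. (indicator D x * g x)^2 = (indicator D x * g' x)^2" using aeL by eventually_elim simp
    qed
    then show ?thesis by (subst (asm) integrable_completion) measurable
  qed
  have g'B: "g' \<in> Bb D" using i1 i2 by (auto simp: Bb_def)
  have g'1: "(\<integral>x. g' x \<partial>lborel) = 1"
  proof -
    have "(LINT x|lebesgue. g' x) = (LINT x|lebesgue. g x)"
      using aeL by (intro integral_cong_AE) (auto elim!: eventually_mono intro: measurable_completion)
    then show ?thesis using g1 by (simp add: integral_completion)
  qed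
  have teq: "transfer (\<lambda>x y. \<kappa> x y + kp x y) g = transfer (\<lambda>x y. \<kappa> x y + kp x y) g'"
  proof
    fix y
    have m1: "(\<lambda>x. (\<kappa> x y + kp x y) * g x) \<in> borel_measurable lebesgue"
    proof -
      have "(\<lambda>x. \<kappa> x y + kp x y) \<in> borel_measurable lebesgue" by (rule measurable_completion) measurable
      then show ?thesis using gm by measurable
    qed
    have m2: "(\<lambda>x. (\<kappa> x y + kp x y) * g' x) \<in> borel_measurable lebesgue"
      by (rule measurable_completion) measurable
    show "transfer (\<lambda>x y. \<kappa> x y + kp x y) g y = transfer (\<lambda>x y. \<kappa> x y + kp x y) g' y"
      unfolding transfer_def using aeL m1 m2 by (intro integral_cong_AE) (auto elim!: eventually_mono)
  qed
  have "AE y in lebesgue. Ld g' y = g' y"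
    using gf aeL unfolding teq transfer_Ld[OF g'b] by eventually_elim simp
  then have "AE y in lborel. Ld g' y = g' y" by (simp add: AE_completion_iff)
  from FF_unique[OF g'B g'1 this] have "AE x in lebesgue. g' x = FF x" by (rule AE_completion)
  with aeL show ?thesis by eventually_elim simp
qed

end

context base2
begin

lemma final_fixed:
  assumes DRD: "D \<subseteq> cball 0 RD"
  obtains \<epsilon>0 where "0 < \<epsilon>0"
    "\<And>kp E2. (\<lambda>(x,y). kp x y) \<in> borel_measurable (lborel \<Otimes>\<^sub>M lborel) \<Longrightarrow>
      (\<And>x y. (x, y) \<notin> D \<times> D \<Longrightarrow> kp x y = 0) \<Longrightarrow>
      (\<integral>\<^sup>+z. ennreal ((kp (fst z) (snd z))^2) \<partial>(lborel \<Otimes>\<^sub>M lborel)) = ennreal E2 \<Longrightarrow>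
      0 \<le> E2 \<Longrightarrow>
      (\<And>g. g \<in> strong_space D \<Longrightarrow> integrable lebesgue (transfer (\<lambda>x y. \<kappa> x y + kp x y) g) \<and>
         (LINT y|lebesgue. transfer (\<lambda>x y. \<kappa> x y + kp x y) g y) = (LINT x|lebesgue. g x)) \<Longrightarrow>
      sqrt E2 \<le> \<epsilon>0 \<Longrightarrow>
      (\<exists>f \<in> strong_space D.
              (LINT x|lebesgue. f x) = 1 \<and>
              (AE y in lebesgue. transfer (\<lambda>x y. \<kappa> x y + kp x y) f y = f y) \<and>
              (\<forall>g \<in> strong_space D.
                 (LINT x|lebesgue. g x) = 1 \<and>
                 (AE y in lebesgue. transfer (\<lambda>x y. \<kappa> x y + kp x y) g y = g y)
                 \<longrightarrow> (AE x in lebesgue. g x = f x)))"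
proof -
  have "\<exists>\<alpha> \<beta>. 0 < \<beta> \<and> 0 \<le> \<alpha> \<and> \<alpha> < 1 \<and> (\<forall>f. f \<in> Bb D \<longrightarrow> (\<integral>x. f x \<partial>lborel) = 0 \<longrightarrow> nb \<beta> (Tk \<kappa> f) \<le> \<alpha> * nb \<beta> f)"
  proof (rule contraction)
    fix \<alpha> \<beta> assume "0 < \<beta>" "0 \<le> \<alpha>" "\<alpha> < 1"
      "\<And>f. f \<in> Bb D \<Longrightarrow> (\<integral>x. f x \<partial>lborel) = 0 \<Longrightarrow> nb \<beta> (Tk \<kappa> f) \<le> \<alpha> * nb \<beta> f"
    then show ?thesis by (intro exI[of _ \<alpha>] exI[of _ \<beta>]) auto
  qed
  then obtain \<alpha> \<beta> where H: "0 < \<beta> \<and> 0 \<le> \<alpha> \<and> \<alpha> < 1 \<and> (\<forall>f. f \<in> Bb D \<longrightarrow> (\<integral>x. f x \<partial>lborel) = 0 \<longrightarrow> nb \<beta> (Tk \<kappa> f) \<le> \<alpha> * nb \<beta> f)"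
    by (elim exE)
  have \<beta>: "0 < \<beta>" and \<alpha>: "0 \<le> \<alpha>" "\<alpha> < 1" using H by auto
  have contr: "\<And>f. f \<in> Bb D \<Longrightarrow> (\<integral>x. f x \<partial>lborel) = 0 \<Longrightarrow> nb \<beta> (Tk \<kappa> f) \<le> \<alpha> * nb \<beta> f"
    using H by auto
  define mm where "mm = measure lborel D"
  define tt where "tt = (1 - \<alpha>) / (2 * (sqrt 2 * C0 * sqrt mm + 1))"
  define c3 where "c3 = (1 + \<beta> * RD^2) * sqrt mm"
  define \<epsilon>0 where "\<epsilon>0 = (1 + \<alpha>) / 2 * tt / (c3 + tt * sqrt 2)"
  have mm: "0 \<le> mm" by (simp add: mm_def)
  have tt: "0 < tt" unfolding tt_def using \<alpha> C0 mm by (intro divide_pos_pos) (auto intro!: add_nonneg_pos)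
  have c3: "0 \<le> c3" unfolding c3_def using \<beta> mm by simp
  have den: "0 < c3 + tt * sqrt 2" using c3 tt by (simp add: add_nonneg_pos)
  have e0: "0 < \<epsilon>0" unfolding \<epsilon>0_def using \<alpha> tt den by simp
  show ?thesis
  proof (rule that[OF e0])
    fix kp E2
    assume kpm: "(\<lambda>(x,y). kp x y) \<in> borel_measurable (lborel \<Otimes>\<^sub>M lborel)"
      and ksupp: "\<And>x y. (x, y) \<notin> D \<times> D \<Longrightarrow> kp x y = 0"
      and kL2: "(\<integral>\<^sup>+z. ennreal ((kp (fst z) (snd z))^2) \<partial>(lborel \<Otimes>\<^sub>M lborel)) = ennreal E2"
      and E2: "0 \<le> E2"
      and pr: "\<And>g. g \<in> strong_space D \<Longrightarrow> integrable lebesgue (transfer (\<lambda>x y. \<kappa> x y + kp x y) g) \<and>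
         (LINT y|lebesgue. transfer (\<lambda>x y. \<kappa> x y + kp x y) g y) = (LINT x|lebesgue. g x)"
      and sm: "sqrt E2 \<le> \<epsilon>0"
    have dnz: "c3 + tt * sqrt 2 \<noteq> 0" using den by simp
    have ed: "\<epsilon>0 * (c3 + tt * sqrt 2) = (1 + \<alpha>) / 2 * tt"
      unfolding \<epsilon>0_def using dnz by (simp add: field_simps)
    have small: "sqrt E2 * (c3 + tt * sqrt 2) \<le> (1 + \<alpha>) / 2 * tt"
      using mult_right_mono[OF sm less_imp_le[OF den]] unfolding ed .
    have PA: "pert \<kappa> \<theta>1 D lam0 C0 a A \<gamma> K kp RD E2"
      by (rule pert.intro[OF base2_axioms pert_axioms.intro])
         (use kpm ksupp kL2 E2 DRD pr in auto)
    have P3: "pert3 \<kappa> \<theta>1 D lam0 C0 a A \<gamma> K kp RD E2 \<alpha> \<beta>"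
      by (rule pert3.intro[OF PA pert3_axioms.intro])
         (use \<beta> \<alpha> contr small in \<open>auto simp: tt_def c3_def mm_def\<close>)
    interpret P: pert3 \<kappa> \<theta>1 D lam0 C0 a A \<gamma> K kp RD E2 \<alpha> \<beta> by (rule P3)
    show "\<exists>f \<in> strong_space D.
              (LINT x|lebesgue. f x) = 1 \<and>
              (AE y in lebesgue. transfer (\<lambda>x y. \<kappa> x y + kp x y) f y = f y) \<and>
              (\<forall>g \<in> strong_space D.
                 (LINT x|lebesgue. g x) = 1 \<and>
                 (AE y in lebesgue. transfer (\<lambda>x y. \<kappa> x y + kp x y) g y = g y)
                 \<longrightarrow> (AE x in lebesgue. g x = f x))"
      using P.exist_strong P.uniq_strong by blast
  qed
qed

end

theorem proposition4p5:
  fixes b :: "'a::euclidean_space \<Rightarrow> 'a"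
    and \<theta> :: "real \<Rightarrow> 'a \<Rightarrow> 'a"
    and \<kappa> :: "'a \<Rightarrow> 'a \<Rightarrow> real"
    and c1 c2 lam0 lam1 C0 C1 \<delta>bar :: real
    and D :: "'a set"
    and \<kappa>dot :: "'a \<Rightarrow> 'a \<Rightarrow> real"
    and r :: "real \<Rightarrow> 'a \<Rightarrow> 'a \<Rightarrow> real"
  assumes lip: "\<And>x0. \<exists>K>0. \<exists>\<delta>0>0. \<forall>x. norm (x0 - x) < \<delta>0 \<longrightarrow>
                    norm (b x0 - b x) \<le> K * norm (x0 - x)"
    and diss: "c2 > 0" "\<And>x. inner (b x) x \<le> c1 - c2 * (norm x)^2"
    and flow0: "\<And>x. \<theta> 0 x = x"
    and flow: "\<And>x t. t \<ge> 0 \<Longrightarrow>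
                 ((\<lambda>s. \<theta> s x) has_vector_derivative b (\<theta> t x)) (at t within {0..})"
    and \<kappa>_cont: "continuous_on UNIV (\<lambda>z. \<kappa> (fst z) (snd z))"
    and cst: "0 < lam0" "lam0 \<le> 1" "0 < lam1" "lam1 \<le> 1" "C0 \<ge> 1" "C1 \<ge> 1"
    and gauss_lower: "\<And>x y. exp (- ((norm (\<theta> 1 x - y))^2) / lam0) / C0 \<le> \<kappa> x y"
    and gauss_upper: "\<And>x y. \<kappa> x y \<le> C0 * exp (- lam0 * (norm (\<theta> 1 x - y))^2)"
    and grad_x: "\<And>x y. \<exists>Dx. ((\<lambda>x'. \<kappa> x' y) has_derivative Dx) (at x) \<and>
                   onorm Dx \<le> C1 * exp (- lam1 * (norm (\<theta> 1 x - y))^2)"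
    and grad_y: "\<And>x y. \<exists>Dy. ((\<lambda>y'. \<kappa> x y') has_derivative Dy) (at y) \<and>
                   onorm Dy \<le> C1 * exp (- lam1 * (norm (\<theta> 1 x - y))^2)"
    and D_cpt: "compact D" "0 \<in> interior D"
    and \<delta>bar_pos: "\<delta>bar > 0"
    and \<kappa>dot_L2: "L2kernel \<kappa>dot"
    and \<kappa>dot_supp: "\<And>x y. (x, y) \<notin> D \<times> D \<Longrightarrow> \<kappa>dot x y = 0"
    and r_L2: "\<And>\<delta>. 0 \<le> \<delta> \<Longrightarrow> \<delta> < \<delta>bar \<Longrightarrow> L2kernel (r \<delta>)"
    and r_supp: "\<And>\<delta> x y. 0 \<le> \<delta> \<Longrightarrow> \<delta> < \<delta>bar \<Longrightarrow> (x, y) \<notin> D \<times> D \<Longrightarrow> r \<delta> x y = 0"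
    and r0: "\<And>x y. r 0 x y = 0"
    and r_small: "((\<lambda>\<delta>. L2norm (r \<delta>) / \<delta>) \<longlongrightarrow> 0) (at_right 0)"
    and int_pres: "\<And>\<delta> g. 0 \<le> \<delta> \<Longrightarrow> \<delta> < \<delta>bar \<Longrightarrow> g \<in> strong_space D \<Longrightarrow>
        integrable lebesgue (transfer (\<lambda>x y. \<kappa> x y + \<delta> * \<kappa>dot x y + r \<delta> x y) g) \<and>
        (LINT y|lebesgue. transfer (\<lambda>x y. \<kappa> x y + \<delta> * \<kappa>dot x y + r \<delta> x y) g y)
          = (LINT x|lebesgue. g x)"
  shows "\<exists>\<delta>1>0. \<forall>\<delta>. 0 \<le> \<delta> \<and> \<delta> < \<delta>1 \<and> \<delta> < \<delta>bar \<longrightarrow>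
           (\<exists>f \<in> strong_space D.
              (LINT x|lebesgue. f x) = 1 \<and>
              (AE y in lebesgue. transfer (\<lambda>x y. \<kappa> x y + \<delta> * \<kappa>dot x y + r \<delta> x y) f y = f y) \<and>
              (\<forall>g \<in> strong_space D.
                 (LINT x|lebesgue. g x) = 1 \<and>
                 (AE y in lebesgue. transfer (\<lambda>x y. \<kappa> x y + \<delta> * \<kappa>dot x y + r \<delta> x y) g y = g y)
                 \<longrightarrow> (AE x in lebesgue. g x = f x)))"
proof -
  have Dc: "compact D" using D_cpt by simp
  have Dm: "D \<in> sets borel" using Dc by (simp add: compact_imp_closed borel_closed)
  obtain RD where DRD: "D \<subseteq> cball 0 RD"
  proof -
    obtain bb where "\<forall>x\<in>D. norm x \<le> bb" using compact_imp_bounded[OF Dc] by (auto simp: bounded_iff)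
    then have "D \<subseteq> cball 0 bb" by auto
    then show ?thesis by (rule that)
  qed
  have Dfin: "emeasure lborel D < \<infinity>"
  proof -
    have "emeasure lborel D \<le> emeasure lborel (cball (0::'a) RD)" using DRD by (rule emeasure_mono) simp
    then show ?thesis using emeasure_lborel_cball_finite[of "0::'a" RD] by (rule le_less_trans)
  qed
  have \<kappa>m: "(\<lambda>(x,y). \<kappa> x y) \<in> borel_measurable (lborel \<Otimes>\<^sub>M lborel)"
  proof -
    have "(\<lambda>z. \<kappa> (fst z) (snd z)) \<in> borel_measurable borel"
      by (rule borel_measurable_continuous_onI[OF \<kappa>_cont])
    then have "(\<lambda>z. \<kappa> (fst z) (snd z)) \<in> borel_measurable (lborel :: ('a \<times> 'a) measure)" by simp
    then show ?thesis by (simp add: lborel_prod case_prod_beta')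
  qed
  define aa where "aa = exp (-2*c2)"
  define AA where "AA = \<bar>c1\<bar> / c2"
  have flowb: "\<And>x. (norm (\<theta> 1 x))^2 \<le> aa * (norm x)^2 + AA"
    unfolding aa_def AA_def by (rule flow_bound[OF diss flow0 flow])
  have aa: "0 \<le> aa" "aa < 1" using diss(1) by (auto simp: aa_def)
  have AA: "0 \<le> AA" using diss(1) by (simp add: AA_def)
  have k0: "(\<lambda>x y. \<kappa> x y + 0 * \<kappa>dot x y + r 0 x y) = \<kappa>" by (simp add: r0 fun_eq_iff)
  have pres: "\<And>g. g \<in> strong_space D \<Longrightarrow> integrable lebesgue (transfer \<kappa> g) \<and>
         (LINT y|lebesgue. transfer \<kappa> g y) = (LINT x|lebesgue. g x)"
    using int_pres[of 0] \<delta>bar_pos unfolding k0 by auto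
  interpret B: base \<kappa> "\<theta> 1" D lam0 C0 aa AA
    by (rule base.intro) (use Dm \<kappa>m cst gauss_lower gauss_upper flowb aa AA Dfin pres in auto)
  obtain \<gamma> K where \<gamma>: "0 \<le> \<gamma>" "\<gamma> < 1" and K: "1 \<le> K"
    and ly: "AE x in lborel. (\<integral>\<^sup>+y. ennreal (Wf y * \<kappa> x y) \<partial>lborel) \<le> ennreal (\<gamma> * Wf x + K)"
    by (rule B.lyap)
  interpret B2: base2 \<kappa> "\<theta> 1" D lam0 C0 aa AA \<gamma> K
    by (rule base2.intro[OF B.base_axioms base2_axioms.intro]) (use \<gamma> K ly in auto)
  obtain \<epsilon>0 where e0: "0 < \<epsilon>0" and FIX: "\<And>kp E2. (\<lambda>(x,y). kp x y) \<in> borel_measurable (lborel \<Otimes>\<^sub>M lborel) \<Longrightarrow>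
      (\<And>x y. (x, y) \<notin> D \<times> D \<Longrightarrow> kp x y = 0) \<Longrightarrow>
      (\<integral>\<^sup>+z. ennreal ((kp (fst z) (snd z))^2) \<partial>(lborel \<Otimes>\<^sub>M lborel)) = ennreal E2 \<Longrightarrow>
      0 \<le> E2 \<Longrightarrow>
      (\<And>g. g \<in> strong_space D \<Longrightarrow> integrable lebesgue (transfer (\<lambda>x y. \<kappa> x y + kp x y) g) \<and>
         (LINT y|lebesgue. transfer (\<lambda>x y. \<kappa> x y + kp x y) g y) = (LINT x|lebesgue. g x)) \<Longrightarrow>
      sqrt E2 \<le> \<epsilon>0 \<Longrightarrow>
      (\<exists>f \<in> strong_space D.
              (LINT x|lebesgue. f x) = 1 \<and>
              (AE y in lebesgue. transfer (\<lambda>x y. \<kappa> x y + kp x y) f y = f y) \<and>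
              (\<forall>g \<in> strong_space D.
                 (LINT x|lebesgue. g x) = 1 \<and>
                 (AE y in lebesgue. transfer (\<lambda>x y. \<kappa> x y + kp x y) g y = g y)
                 \<longrightarrow> (AE x in lebesgue. g x = f x)))"
    using B2.final_fixed[OF DRD] by blast
  have kdm: "(\<lambda>z. \<kappa>dot (fst z) (snd z)) \<in> borel_measurable (lborel \<Otimes>\<^sub>M lborel)"
    and kdi: "integrable (lborel \<Otimes>\<^sub>M lborel) (\<lambda>z. (\<kappa>dot (fst z) (snd z))^2)"
    using \<kappa>dot_L2 by (auto simp: L2kernel_def lborel_prod)
  define I\<kappa> where "I\<kappa> = (\<integral>z. (\<kappa>dot (fst z) (snd z))^2 \<partial>(lborel \<Otimes>\<^sub>M lborel))"
  have I\<kappa>: "0 \<le> I\<kappa>" unfolding I\<kappa>_def by simp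
  have "eventually (\<lambda>\<delta>. dist (L2norm (r \<delta>) / \<delta>) 0 < 1) (at_right 0)"
    using r_small by (rule tendstoD) simp
  then obtain \<delta>2 where \<delta>2: "\<delta>2 > 0" and \<delta>2P: "\<And>\<delta>. 0 < \<delta> \<Longrightarrow> \<delta> < \<delta>2 \<Longrightarrow> \<bar>L2norm (r \<delta>) / \<delta>\<bar> < 1"
    by (auto simp: eventually_at_right_field)
  define c where "c = sqrt (2 * (I\<kappa> + 1))"
  have c: "0 < c" using I\<kappa> by (simp add: c_def)
  define \<delta>1 where "\<delta>1 = min \<delta>2 (\<epsilon>0 / c)"
  have \<delta>1: "0 < \<delta>1" using \<delta>2 e0 c by (simp add: \<delta>1_def)
  show ?thesis
  proof (intro exI[of _ \<delta>1] conjI allI impI)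
    show "0 < \<delta>1" by (rule \<delta>1)
    fix \<delta> assume H: "0 \<le> \<delta> \<and> \<delta> < \<delta>1 \<and> \<delta> < \<delta>bar"
    then have d0: "0 \<le> \<delta>" and d1: "\<delta> < \<delta>1" and db: "\<delta> < \<delta>bar" by auto
    define kp where "kp = (\<lambda>x y. \<delta> * \<kappa>dot x y + r \<delta> x y)"
    have rm: "(\<lambda>z. r \<delta> (fst z) (snd z)) \<in> borel_measurable (lborel \<Otimes>\<^sub>M lborel)"
      and ri: "integrable (lborel \<Otimes>\<^sub>M lborel) (\<lambda>z. (r \<delta> (fst z) (snd z))^2)"
      using r_L2[OF d0 db] by (auto simp: L2kernel_def lborel_prod)
    define Ir where "Ir = (\<integral>z. (r \<delta> (fst z) (snd z))^2 \<partial>(lborel \<Otimes>\<^sub>M lborel))"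
    have kpm: "(\<lambda>(x,y). kp x y) \<in> borel_measurable (lborel \<Otimes>\<^sub>M lborel)"
      using kdm rm unfolding kp_def case_prod_beta' by measurable
    have kpi: "integrable (lborel \<Otimes>\<^sub>M lborel) (\<lambda>z. (kp (fst z) (snd z))^2)"
    proof (rule Bochner_Integration.integrable_bound)
      show "integrable (lborel \<Otimes>\<^sub>M lborel) (\<lambda>z. 2 * \<delta>^2 * (\<kappa>dot (fst z) (snd z))^2 + 2 * (r \<delta> (fst z) (snd z))^2)"
        using kdi ri by simp
      show "(\<lambda>z. (kp (fst z) (snd z))^2) \<in> borel_measurable (lborel \<Otimes>\<^sub>M lborel)"
        using kdm rm unfolding kp_def by measurable
      show "AE z in lborel \<Otimes>\<^sub>M lborel. norm ((kp (fst z) (snd z))^2)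
          \<le> norm (2 * \<delta>^2 * (\<kappa>dot (fst z) (snd z))^2 + 2 * (r \<delta> (fst z) (snd z))^2)"
      proof (rule AE_I2)
        fix z :: "'a \<times> 'a"
        have "(\<delta> * \<kappa>dot (fst z) (snd z) + r \<delta> (fst z) (snd z))^2 \<le> 2 * (\<delta> * \<kappa>dot (fst z) (snd z))^2 + 2 * (r \<delta> (fst z) (snd z))^2"
          by (rule sq_sum_le)
        then show "norm ((kp (fst z) (snd z))^2)
          \<le> norm (2 * \<delta>^2 * (\<kappa>dot (fst z) (snd z))^2 + 2 * (r \<delta> (fst z) (snd z))^2)"
          by (simp add: kp_def power_mult_distrib)
      qed
    qed
    define E2 where "E2 = (\<integral>z. (kp (fst z) (snd z))^2 \<partial>(lborel \<Otimes>\<^sub>M lborel))"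
    have E2: "0 \<le> E2" unfolding E2_def by simp
    have kL2: "(\<integral>\<^sup>+z. ennreal ((kp (fst z) (snd z))^2) \<partial>(lborel \<Otimes>\<^sub>M lborel)) = ennreal E2"
      unfolding E2_def using kpi by (intro nn_integral_eq_integral) auto
    have E2le: "E2 \<le> 2 * \<delta>^2 * I\<kappa> + 2 * Ir"
    proof -
      have "E2 \<le> (\<integral>z. 2 * \<delta>^2 * (\<kappa>dot (fst z) (snd z))^2 + 2 * (r \<delta> (fst z) (snd z))^2 \<partial>(lborel \<Otimes>\<^sub>M lborel))"
        unfolding E2_def using kpi kdi ri
        by (intro integral_mono) (auto simp: kp_def power_mult_distrib intro: order_trans[OF sq_sum_le])
      also have "\<dots> = 2 * \<delta>^2 * I\<kappa> + 2 * Ir" using kdi ri by (simp add: I\<kappa>_def Ir_def)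
      finally show ?thesis .
    qed
    have sE: "sqrt E2 \<le> \<epsilon>0"
    proof (cases "\<delta> = 0")
      case True
      then have "E2 = 0" unfolding E2_def kp_def by (simp add: r0)
      then show ?thesis using e0 by simp
    next
      case False
      then have dp: "0 < \<delta>" using d0 by simp
      have "\<delta> < \<delta>2" using d1 by (simp add: \<delta>1_def)
      then have "\<bar>L2norm (r \<delta>) / \<delta>\<bar> < 1" using \<delta>2P dp by blast
      then have "L2norm (r \<delta>) < \<delta>" using dp by (simp add: divide_less_eq abs_less_iff)
      moreover have "L2norm (r \<delta>) = sqrt Ir" by (simp add: L2norm_def Ir_def lborel_prod)
      ultimately have "sqrt Ir < \<delta>" by simp
      moreover have Ir0: "0 \<le> Ir" unfolding Ir_def by simp
      ultimately have "Ir \<le> \<delta>^2" using dp by (metis less_imp_le real_sqrt_le_iff real_sqrt_pow2 power2_eq_square sqrt_le_D)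
      then have "E2 \<le> 2 * \<delta>^2 * (I\<kappa> + 1)" using E2le by (simp add: algebra_simps)
      then have "sqrt E2 \<le> sqrt (2 * \<delta>^2 * (I\<kappa> + 1))" by (rule real_sqrt_le_mono)
      also have "\<dots> = sqrt (\<delta>^2 * (2 * (I\<kappa> + 1)))" by (rule arg_cong[where f=sqrt]) (simp add: algebra_simps)
      also have "\<dots> = \<delta> * c" using dp by (simp add: c_def real_sqrt_mult)
      also have "\<dots> \<le> \<epsilon>0 / c * c"
        using d1 c by (intro mult_right_mono) (auto simp: \<delta>1_def)
      also have "\<dots> = \<epsilon>0" using c by simp
      finally show ?thesis .
    qed
    have keq: "(\<lambda>x y. \<kappa> x y + \<delta> * \<kappa>dot x y + r \<delta> x y) = (\<lambda>x y. \<kappa> x y + kp x y)"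
      by (simp add: kp_def fun_eq_iff add.assoc)
    have pr: "\<And>g. g \<in> strong_space D \<Longrightarrow> integrable lebesgue (transfer (\<lambda>x y. \<kappa> x y + kp x y) g) \<and>
         (LINT y|lebesgue. transfer (\<lambda>x y. \<kappa> x y + kp x y) g y) = (LINT x|lebesgue. g x)"
      using int_pres[OF d0 db] unfolding keq by blast
    have ksupp: "\<And>x y. (x, y) \<notin> D \<times> D \<Longrightarrow> kp x y = 0"
      using \<kappa>dot_supp r_supp[OF d0 db] by (simp add: kp_def)
    show "\<exists>f \<in> strong_space D.
              (LINT x|lebesgue. f x) = 1 \<and>
              (AE y in lebesgue. transfer (\<lambda>x y. \<kappa> x y + \<delta> * \<kappa>dot x y + r \<delta> x y) f y = f y) \<and>
              (\<forall>g \<in> strong_space D.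
                 (LINT x|lebesgue. g x) = 1 \<and>
                 (AE y in lebesgue. transfer (\<lambda>x y. \<kappa> x y + \<delta> * \<kappa>dot x y + r \<delta> x y) g y = g y)
                 \<longrightarrow> (AE x in lebesgue. g x = f x))"
      unfolding keq by (rule FIX[OF kpm ksupp kL2 E2 pr sE])
  qed
qed


end
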